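(* Let $0\le q<d$ and let $X,Y$ be cubical sets in $\mathbb{R}^d$ such that the symmetric difference $X\triangle Y$ is bounded. Then there exists $\Delta_\infty\in\mathbb{Z}$ such that for every sequence of boxes $A_n=x_n+[-m_n,m_n]^d$ ($x_n\in\mathbb{Z}^d$, $m_n\in\mathbb{N}$) whose lattice point sets satisfy $\liminf_n (A_n\cap\mathbb{Z}^d)=\mathbb{Z}^d$ (i.e. every $z\in\mathbb{Z}^d$ lies in $A_n$ for all sufficiently large $n$), there exists $n_\infty\in\mathbb{N}$ such that $$\beta_q(X\cap A_n)-\beta_q(Y\cap A_n)=\Delta_\infty\quad\text{for all }n\ge n_\infty.$$
   Context: An elementary interval is $[l,l+1]$ or $[l]=[l,l]$ with $l\in\mathbb{Z}$; an elementary cube in $\mathbb{R}^d$ is a product of $d$ elementary intervals, of dimension equal to the number of nondegenerate factors. A cubical set is a (possibly infinite) union of elementary cubes; the intersection of a cubical set with a box $x+[-m,m]^d$, $x\in\mathbb{Z}^d$, is a bounded cubical set. For a cubical set $X$, $C_k(X)$ is the free $\mathbb{Z}$-module on the $k$-dimensional elementary cubes contained in $X$, with the standard cubical boundary operator $\partial\widehat Q=\sum_{j=1}^k(-1)^{j-1}(\widehat{Q_j^+}-\widehat{Q_j^-})$; $H_k(X)$ is the resulting homology, and for bounded $X$, $\beta_k(X)$ is the rank of the free part of $H_k(X)$. *)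

theory Defs
  imports Complex_Main
begin

text \<open>An elementary cube in R^d is a list of d
elementary intervals; an interval is encoded as (l, b): b = True means [l, l+1]
(nondegenerate), b = False means [l] = [l,l].\<close>

type_synonym ecube = "(int \<times> bool) list"

definition cube_dim :: "ecube \<Rightarrow> nat" where
  "cube_dim Q = length (filter snd Q)"

definition realize :: "ecube \<Rightarrow> real list set" where
  "realize Q = {x. length x = length Q \<and>
     (\<forall>i<length Q. real_of_int (fst (Q!i)) \<le> x!i \<and>
                    x!i \<le> real_of_int (fst (Q!i)) + (if snd (Q!i) then 1 else 0))}"

definition cubical_set :: "nat \<Rightarrow> real list set \<Rightarrow> bool" where
  "cubical_set d X \<longleftrightarrow> (\<exists>S. (\<forall>Q\<in>S. length Q = d) \<and> X = \<Union>(realize ` S))"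

definition box :: "nat \<Rightarrow> int list \<Rightarrow> nat \<Rightarrow> real list set" where
  "box d x m = {y. length y = d \<and> (\<forall>i<d. \<bar>y!i - real_of_int (x!i)\<bar> \<le> real m)}"

definition bounded_set :: "nat \<Rightarrow> real list set \<Rightarrow> bool" where
  "bounded_set d S \<longleftrightarrow> (\<exists>R. \<forall>y\<in>S. \<forall>i<d. \<bar>y!i\<bar> \<le> R)"

definition nondeg :: "ecube \<Rightarrow> nat list" where
  "nondeg Q = filter (\<lambda>i. snd (Q!i)) [0..<length Q]"

definition face_plus :: "ecube \<Rightarrow> nat \<Rightarrow> ecube" where
  "face_plus Q i = Q[i := (fst (Q!i) + 1, False)]"

definition face_minus :: "ecube \<Rightarrow> nat \<Rightarrow> ecube" where
  "face_minus Q i = Q[i := (fst (Q!i), False)]"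

definition cube_bd :: "ecube \<Rightarrow> ecube \<Rightarrow> int" where
  "cube_bd Q P = (\<Sum>j<length (nondeg Q).
      (-1) ^ j * ((if P = face_plus Q (nondeg Q ! j) then 1 else 0)
                - (if P = face_minus Q (nondeg Q ! j) then 1 else 0)))"

text \<open>Chains are finitely supported integer functions on elementary cubes.\<close>
definition chain_bd :: "(ecube \<Rightarrow> int) \<Rightarrow> ecube \<Rightarrow> int" where
  "chain_bd c P = (\<Sum>Q\<in>{Q. c Q \<noteq> 0}. c Q * cube_bd Q P)"

definition chains :: "nat \<Rightarrow> nat \<Rightarrow> real list set \<Rightarrow> (ecube \<Rightarrow> int) set" where
  "chains d k X = {c. finite {Q. c Q \<noteq> 0} \<and>
      (\<forall>Q. c Q \<noteq> 0 \<longrightarrow> length Q = d \<and> cube_dim Q = k \<and> realize Q \<subseteq> X)}"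

definition cycles :: "nat \<Rightarrow> nat \<Rightarrow> real list set \<Rightarrow> (ecube \<Rightarrow> int) set" where
  "cycles d k X = {c \<in> chains d k X. chain_bd c = (\<lambda>_. 0)}"

definition boundaries :: "nat \<Rightarrow> nat \<Rightarrow> real list set \<Rightarrow> (ecube \<Rightarrow> int) set" where
  "boundaries d k X = chain_bd ` chains d (Suc k) X"

text \<open>Rank of H_k(X) = Z_k/B_k: the maximal number of elements of H_k that are
  Z-linearly independent (= rank of the free part for finitely generated groups).\<close>
definition betti :: "nat \<Rightarrow> nat \<Rightarrow> real list set \<Rightarrow> nat" where
  "betti d k X = Sup {n. \<exists>z :: nat \<Rightarrow> ecube \<Rightarrow> int. (\<forall>i<n. z i \<in> cycles d k X) \<and>
      (\<forall>a :: nat \<Rightarrow> int. (\<lambda>P. \<Sum>i<n. a i * z i P) \<in> boundaries d k X \<longrightarrow> (\<forall>i<n. a i = 0))}"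

end

theory Submission
  imports Defs
begin


definition comb :: "(nat \<Rightarrow> int) \<Rightarrow> (nat \<Rightarrow> 'a \<Rightarrow> int) \<Rightarrow> nat \<Rightarrow> 'a \<Rightarrow> int" where
  "comb a z n = (\<lambda>P. \<Sum>i<n. a i * z i P)"

definition sk :: "nat \<Rightarrow> nat \<Rightarrow> nat" where
  "sk j i = (if i < j then i else Suc i)"

definition ins :: "nat \<Rightarrow> int \<Rightarrow> (nat \<Rightarrow> int) \<Rightarrow> nat \<Rightarrow> int" where
  "ins j c a = (\<lambda>i. if i = j then c else if i < j then a i else a (i - 1))"

lemma ins_sk[simp]: "ins j c a (sk j i) = a i"
  by (auto simp: ins_def sk_def)

lemma ins_j[simp]: "ins j c a j = c"
  by (simp add: ins_def)

lemma sk_less: "i < n \<Longrightarrow> j \<le> n \<Longrightarrow> sk j i < Suc n"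
  by (auto simp: sk_def)

lemma sum_sk: "j \<le> n \<Longrightarrow> (\<Sum>i<Suc n. f i) = f j + (\<Sum>i<n. f (sk j i))"
proof (induction n arbitrary: j)
  case 0 then show ?case by simp
next
  case (Suc n)
  show ?case
  proof (cases "j \<le> n")
    case True
    have "(\<Sum>i<Suc (Suc n). f i) = (\<Sum>i<Suc n. f i) + f (Suc n)" by simp
    also have "\<dots> = f j + (\<Sum>i<n. f (sk j i)) + f (Suc n)" using Suc.IH[OF True] by simp
    also have "f (Suc n) = f (sk j n)" using True by (simp add: sk_def)
    finally show ?thesis by (simp add: add.assoc)
  next
    case False
    then have j: "j = Suc n" using Suc.prems by simp
    have "(\<Sum>i<Suc n. f (sk j i)) = (\<Sum>i<Suc n. f i)"
      by (rule sum.cong) (auto simp: sk_def j)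
    then show ?thesis using j by (simp add: ac_simps)
  qed
qed

lemma comb_ins: assumes "j \<le> n" shows "comb (ins j c a) z (Suc n) P = c * z j P + (\<Sum>i<n. a i * z (sk j i) P)"
proof -
  have "comb (ins j c a) z (Suc n) P = (\<Sum>i<Suc n. ins j c a i * z i P)" by (simp add: comb_def)
  also have "\<dots> = ins j c a j * z j P + (\<Sum>i<n. ins j c a (sk j i) * z (sk j i) P)"
    using assms by (rule sum_sk)
  also have "\<dots> = c * z j P + (\<Sum>i<n. a i * z (sk j i) P)" by (simp only: ins_j ins_sk)
  finally show ?thesis .
qed

lemma comb_upd: "comb a (z(n := v)) (Suc n) P = comb a z n P + a n * v P"
proof -
  have "(\<Sum>i<n. a i * (z(n := v)) i P) = (\<Sum>i<n. a i * z i P)"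
    by (rule sum.cong) auto
  then show ?thesis unfolding comb_def by simp
qed

lemma dep:
  assumes "finite F"
  shows "\<forall>n z. (\<forall>i<n. \<forall>P. z i P \<noteq> 0 \<longrightarrow> P \<in> F) \<longrightarrow> card F < n \<longrightarrow>
     (\<exists>a. (\<exists>i<n. a i \<noteq> 0) \<and> comb a z n = (\<lambda>_. 0))"
  using assms
proof (induction F rule: finite_induct)
  case empty
  show ?case
  proof (intro allI impI)
    fix n and z :: "nat \<Rightarrow> 'a \<Rightarrow> int"
    assume h: "\<forall>i<n. \<forall>P. z i P \<noteq> 0 \<longrightarrow> P \<in> {}" "card {} < n"
    have "comb (\<lambda>_. 1) z n = (\<lambda>_. 0)" using h(1) by (auto simp: comb_def)
    then show "\<exists>a. (\<exists>i<n. a i \<noteq> 0) \<and> comb a z n = (\<lambda>_. 0)" using h(2)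
      by (intro exI[of _ "\<lambda>_. 1"]) auto
  qed
next
  case (insert P0 F)
  show ?case
  proof (intro allI impI)
    fix n and z :: "nat \<Rightarrow> 'a \<Rightarrow> int"
    assume h: "\<forall>i<n. \<forall>P. z i P \<noteq> 0 \<longrightarrow> P \<in> insert P0 F" "card (insert P0 F) < n"
    have cF: "card (insert P0 F) = Suc (card F)" using insert by simp
    show "\<exists>a. (\<exists>i<n. a i \<noteq> 0) \<and> comb a z n = (\<lambda>_. 0)"
    proof (cases "\<forall>i<n. z i P0 = 0")
      case True
      then have "\<forall>i<n. \<forall>P. z i P \<noteq> 0 \<longrightarrow> P \<in> F" using h(1) by blast
      then show ?thesis using insert.IH h(2) cF by auto
    next
      case False
      then obtain j where j: "j < n" "z j P0 \<noteq> 0" by auto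
      obtain n' where n': "n = Suc n'" using j by (cases n) auto
      define w where "w = (\<lambda>i R. z j P0 * z (sk j i) R - z (sk j i) P0 * z j R)"
      have "\<forall>i<n'. \<forall>P. w i P \<noteq> 0 \<longrightarrow> P \<in> F"
      proof (intro allI impI)
        fix i P assume i: "i < n'" and wP: "w i P \<noteq> 0"
        have ski: "sk j i < n" using sk_less[of i n' j] i j n' by simp
        have "P \<noteq> P0" using wP by (auto simp: w_def)
        moreover have "z (sk j i) P \<noteq> 0 \<or> z j P \<noteq> 0" using wP by (auto simp: w_def)
        ultimately show "P \<in> F" using h(1) ski j by blast
      qed
      moreover have "card F < n'" using h(2) cF n' by simp
      ultimately obtain b where b: "\<exists>i<n'. b i \<noteq> 0" "comb b w n' = (\<lambda>_. 0)"
        using insert.IH by blast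
      define a where "a = ins j (- (\<Sum>i<n'. b i * z (sk j i) P0)) (\<lambda>i. b i * z j P0)"
      have "comb a z n = (\<lambda>_. 0)"
      proof
        fix R
        have "comb a z n R = - (\<Sum>i<n'. b i * z (sk j i) P0) * z j R + (\<Sum>i<n'. b i * z j P0 * z (sk j i) R)"
          unfolding a_def n' using j n' by (subst comb_ins) auto
        also have "\<dots> = (\<Sum>i<n'. b i * w i R)"
        proof -
          have "(\<Sum>i<n'. b i * w i R) = (\<Sum>i<n'. b i * z j P0 * z (sk j i) R) - (\<Sum>i<n'. b i * z (sk j i) P0 * z j R)"
            unfolding sum_subtractf[symmetric] by (rule sum.cong) (simp_all add: w_def right_diff_distrib mult.assoc mult.left_commute)
          then show ?thesis by (simp add: sum_distrib_right)
        qed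
        also have "\<dots> = 0" using b(2) unfolding comb_def by meson
        finally show "comb a z n R = 0" .
      qed
      moreover obtain i0 where "i0 < n'" "b i0 \<noteq> 0" using b(1) by blast
      then have "sk j i0 < n" "a (sk j i0) \<noteq> 0" using sk_less[of i0 n' j] j n' by (auto simp: a_def)
      ultimately show ?thesis by blast
    qed
  qed
qed


definition indepB :: "('a \<Rightarrow> int) set \<Rightarrow> ('a \<Rightarrow> int) set \<Rightarrow> (nat \<Rightarrow> 'a \<Rightarrow> int) \<Rightarrow> nat \<Rightarrow> bool" where
  "indepB Z B z n \<longleftrightarrow> (\<forall>i<n. z i \<in> Z) \<and> (\<forall>a. comb a z n \<in> B \<longrightarrow> (\<forall>i<n. a i = 0))"

definition rk :: "('a \<Rightarrow> int) set \<Rightarrow> ('a \<Rightarrow> int) set \<Rightarrow> nat" where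
  "rk Z B = Sup {n. \<exists>z. indepB Z B z n}"

definition bnd :: "('a \<Rightarrow> int) set \<Rightarrow> ('a \<Rightarrow> int) set \<Rightarrow> bool" where
  "bnd Z B \<longleftrightarrow> (\<exists>N. \<forall>z n. indepB Z B z n \<longrightarrow> n \<le> N)"

definition submod :: "('a \<Rightarrow> int) set \<Rightarrow> bool" where
  "submod B \<longleftrightarrow> (\<lambda>_. 0) \<in> B \<and> (\<forall>x\<in>B. \<forall>y\<in>B. (\<lambda>P. x P + y P) \<in> B) \<and> (\<forall>x\<in>B. \<forall>t. (\<lambda>P. t * x P) \<in> B)"

lemma rk_facts:
  assumes "bnd Z B"
  shows "finite {n. \<exists>z. indepB Z B z n}" "{n. \<exists>z. indepB Z B z n} \<noteq> {}"
    "rk Z B = Max {n. \<exists>z. indepB Z B z n}"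
proof -
  obtain N where N: "\<forall>z n. indepB Z B z n \<longrightarrow> n \<le> N" using assms by (auto simp: bnd_def)
  show f: "finite {n. \<exists>z. indepB Z B z n}"
    by (rule finite_subset[of _ "{..N}"]) (use N in auto)
  have "indepB Z B z 0" for z by (simp add: indepB_def)
  then show ne: "{n. \<exists>z. indepB Z B z n} \<noteq> {}" by blast
  show "rk Z B = Max {n. \<exists>z. indepB Z B z n}" unfolding rk_def using f ne by (rule cSup_eq_Max)
qed

lemma rk_upper: "bnd Z B \<Longrightarrow> indepB Z B z n \<Longrightarrow> n \<le> rk Z B"
  using rk_facts[of Z B] by (metis (mono_tags, lifting) Max_ge mem_Collect_eq)

lemma rk_attained: "bnd Z B \<Longrightarrow> \<exists>z. indepB Z B z (rk Z B)"
  using rk_facts[of Z B] Max_in by fastforce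

lemma not_indep:
  assumes "bnd Z B" "rk Z B < n" "\<forall>i<n. y i \<in> Z"
  shows "\<exists>a. comb a y n \<in> B \<and> (\<exists>i<n. a i \<noteq> 0)"
proof (rule ccontr)
  assume "\<not> ?thesis"
  then have "indepB Z B y n" using assms(3) by (auto simp: indepB_def)
  then show False using rk_upper[OF assms(1)] assms(2) by fastforce
qed

lemma rankA:
  assumes bZ: "bnd Z B" and bZ': "bnd Z' B" and sub: "Z \<subseteq> Z'" and w: "w \<in> Z'" "w Q \<noteq> 0"
    and zQ: "\<forall>y\<in>Z. y Q = 0" and bQ: "\<forall>y\<in>B. y Q = 0" and m: "m \<noteq> 0"
    and dec: "\<forall>z\<in>Z'. \<exists>y\<in>Z. \<exists>t. \<forall>P. m * z P = y P + t * w P"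
    and subZ: "\<forall>x\<in>Z. \<forall>y\<in>Z. \<forall>s t. (\<lambda>P. s * x P + t * y P) \<in> Z"
  shows "rk Z' B = Suc (rk Z B)"
proof (rule antisym)
  define r where "r = rk Z B"
  obtain z where z: "indepB Z B z r" using rk_attained[OF bZ] r_def by blast
  have "indepB Z' B (z(r := w)) (Suc r)"
    unfolding indepB_def
  proof (intro conjI allI impI)
    fix i assume "i < Suc r"
    then show "(z(r := w)) i \<in> Z'" using z sub w by (auto simp: indepB_def less_Suc_eq)
  next
    fix a i assume a: "comb a (z(r := w)) (Suc r) \<in> B" and i: "i < Suc r"
    have c0: "comb a z r Q = 0" using z zQ by (auto simp: indepB_def comb_def intro!: sum.neutral)
    have "comb a (z(r := w)) (Suc r) Q = 0" using a bQ by blast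
    then have ar: "a r = 0" using comb_upd[of a z r w Q] c0 w(2) by simp
    have "comb a (z(r := w)) (Suc r) = comb a z r" using comb_upd[of a z r w] ar by auto
    then have "\<forall>i<r. a i = 0" using a z by (auto simp: indepB_def)
    then show "a i = 0" using i ar by (auto simp: less_Suc_eq)
  qed
  then show "Suc (rk Z B) \<le> rk Z' B" using rk_upper[OF bZ'] r_def by blast
next
  define r' where "r' = rk Z' B"
  obtain z' where z': "indepB Z' B z' r'" using rk_attained[OF bZ'] r'_def by blast
  have "\<forall>i. \<exists>p. i < r' \<longrightarrow> fst p \<in> Z \<and> (\<forall>P. m * z' i P = fst p P + snd p * w P)"
  proof
    fix i
    show "\<exists>p. i < r' \<longrightarrow> fst p \<in> Z \<and> (\<forall>P. m * z' i P = fst p P + snd p * w P)"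
    proof (cases "i < r'")
      case True
      then have "z' i \<in> Z'" using z' by (simp add: indepB_def)
      then obtain yy tt where "yy \<in> Z" "\<forall>P. m * z' i P = yy P + tt * w P" using dec by blast
      then show ?thesis by (intro exI[of _ "(yy, tt)"]) simp
    qed simp
  qed
  from choice[OF this] obtain f where f: "\<forall>i. i < r' \<longrightarrow> fst (f i) \<in> Z \<and> (\<forall>P. m * z' i P = fst (f i) P + snd (f i) * w P)"
    by blast
  define y where "y = (\<lambda>i. fst (f i))"
  define t where "t = (\<lambda>i. snd (f i))"
  have yZ: "\<forall>i<r'. y i \<in> Z" using f by (simp add: y_def)
  have yeq: "\<And>i P. i < r' \<Longrightarrow> y i P = m * z' i P - t i * w P" using f by (simp add: y_def t_def)
  show "r' \<le> Suc (rk Z B)"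
  proof (rule ccontr)
    assume big: "\<not> r' \<le> Suc (rk Z B)"
    show False
    proof (cases "\<forall>i<r'. t i = 0")
      case True
      obtain a where a: "comb a y r' \<in> B" "\<exists>i<r'. a i \<noteq> 0"
        using not_indep[OF bZ _ yZ] big by auto
      have "comb a y r' = comb (\<lambda>i. m * a i) z' r'"
        unfolding comb_def by (rule ext, rule sum.cong) (auto simp: yeq True)
      then have cB: "comb (\<lambda>i. m * a i) z' r' \<in> B" using a(1) by simp
      have "\<forall>a. comb a z' r' \<in> B \<longrightarrow> (\<forall>i<r'. a i = 0)" using z' by (simp add: indepB_def)
      then have "\<forall>i<r'. m * a i = 0" using cB by blast
      then show False using a(2) m by auto
    next
      case False
      then obtain j where j: "j < r'" "t j \<noteq> 0" by auto
      obtain n' where n': "r' = Suc n'" using j by (cases r') auto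
      define y2 where "y2 = (\<lambda>i P. t j * y (sk j i) P - t (sk j i) * y j P)"
      have skl: "\<And>i. i < n' \<Longrightarrow> sk j i < r'" using sk_less j n' by auto
      have "\<forall>i<n'. y2 i \<in> Z"
      proof (intro allI impI)
        fix i assume "i < n'"
        then have "y (sk j i) \<in> Z" "y j \<in> Z" using yZ skl j by auto
        then have "(\<lambda>P. t j * y (sk j i) P + (- t (sk j i)) * y j P) \<in> Z" using subZ by blast
        then show "y2 i \<in> Z" by (simp add: y2_def)
      qed
      moreover have "rk Z B < n'" using big n' by simp
      ultimately obtain b where b: "comb b y2 n' \<in> B" "\<exists>i<n'. b i \<noteq> 0"
        using not_indep[OF bZ] by blast
      define a where "a = ins j (- (m * (\<Sum>i<n'. b i * t (sk j i)))) (\<lambda>i. m * b i * t j)"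
      have "comb a z' r' = comb b y2 n'"
      proof
        fix P
        have "comb a z' r' P = - (m * (\<Sum>i<n'. b i * t (sk j i))) * z' j P + (\<Sum>i<n'. m * b i * t j * z' (sk j i) P)"
          unfolding a_def n' using j n' by (subst comb_ins) auto
        also have "\<dots> = (\<Sum>i<n'. m * b i * t j * z' (sk j i) P) - (\<Sum>i<n'. m * b i * t (sk j i) * z' j P)"
        proof -
          have e1: "m * (\<Sum>i<n'. b i * t (sk j i)) * z' j P = (\<Sum>i<n'. m * b i * t (sk j i) * z' j P)"
            by (simp add: sum_distrib_left sum_distrib_right mult.assoc)
          show ?thesis using e1 by simp
        qed
        also have "\<dots> = (\<Sum>i<n'. m * b i * t j * z' (sk j i) P - m * b i * t (sk j i) * z' j P)"
          by (simp add: sum_subtractf)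
        also have "\<dots> = (\<Sum>i<n'. b i * y2 i P)"
        proof (rule sum.cong)
          fix i assume "i \<in> {..<n'}"
          then have "sk j i < r'" using skl by auto
          then show "m * b i * t j * z' (sk j i) P - m * b i * t (sk j i) * z' j P = b i * y2 i P"
          proof -
            have e1: "y (sk j i) P = m * z' (sk j i) P - t (sk j i) * w P" and e2: "y j P = m * z' j P - t j * w P"
              using yeq \<open>sk j i < r'\<close> j by auto
            show ?thesis unfolding y2_def e1 e2 by (simp add: algebra_simps)
          qed
        qed simp
        finally show "comb a z' r' P = comb b y2 n' P" by (simp add: comb_def)
      qed
      then have "\<forall>i<r'. a i = 0" using b(1) z' by (auto simp: indepB_def)
      moreover obtain i0 where "i0 < n'" "b i0 \<noteq> 0" using b(2) by blast
      ultimately show False using skl[of i0] m j by (auto simp: a_def)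
    qed
  qed
qed

lemma submod_add: "submod B \<Longrightarrow> x \<in> B \<Longrightarrow> y \<in> B \<Longrightarrow> (\<lambda>P. x P + y P) \<in> B"
  unfolding submod_def by blast

lemma submod_smult: "submod B \<Longrightarrow> x \<in> B \<Longrightarrow> (\<lambda>P. t * x P) \<in> B"
  unfolding submod_def by blast

lemma submod_zero: "submod B \<Longrightarrow> (\<lambda>_. 0) \<in> B"
  unfolding submod_def by blast

lemma indep_mono_B: "indepB Z B' z n \<Longrightarrow> B \<subseteq> B' \<Longrightarrow> indepB Z B z n"
  unfolding indepB_def by blast

lemma rankB:
  assumes bZ: "bnd Z B" and v: "v \<in> Z" and vB: "\<forall>t. (\<lambda>P. t * v P) \<in> B \<longrightarrow> t = 0"
    and subB: "submod B" and B': "B' = {(\<lambda>P. b P + t * v P) | b t. b \<in> B}"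
  shows "Suc (rk Z B') = rk Z B"
proof -
  have BB': "B \<subseteq> B'"
  proof
    fix b assume "b \<in> B"
    then have "(\<lambda>P. b P + 0 * v P) \<in> B'" unfolding B' by blast
    then show "b \<in> B'" by simp
  qed
  have bZ': "bnd Z B'" using bZ indep_mono_B[OF _ BB'] unfolding bnd_def by blast
  show ?thesis
  proof (rule antisym)
    define r' where "r' = rk Z B'"
    obtain z where z: "indepB Z B' z r'" using rk_attained[OF bZ'] r'_def by blast
    have "indepB Z B (z(r' := v)) (Suc r')"
      unfolding indepB_def
    proof (intro conjI allI impI)
      fix i assume "i < Suc r'"
      then show "(z(r' := v)) i \<in> Z" using z v by (auto simp: indepB_def less_Suc_eq)
    next
      fix a i assume a: "comb a (z(r' := v)) (Suc r') \<in> B" and i: "i < Suc r'"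
      define S where "S = comb a (z(r' := v)) (Suc r')"
      have "comb a z r' = (\<lambda>P. S P + (- a r') * v P)"
        using comb_upd[of a z r' v] unfolding S_def by auto
      then have "comb a z r' \<in> B'" using a unfolding B' S_def by blast
      then have az: "\<forall>i<r'. a i = 0" using z by (auto simp: indepB_def)
      then have "comb a z r' = (\<lambda>_. 0)" by (auto simp: comb_def)
      then have "S = (\<lambda>P. a r' * v P)" using comb_upd[of a z r' v] unfolding S_def by auto
      then have "a r' = 0" using vB a S_def by auto
      then show "a i = 0" using az i by (auto simp: less_Suc_eq)
    qed
    then show "Suc (rk Z B') \<le> rk Z B" using rk_upper[OF bZ] r'_def by blast
  next
    define r where "r = rk Z B"
    show "r \<le> Suc (rk Z B')"
    proof (cases r)
      case 0 then show ?thesis by simp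
    next
      case (Suc n')
      obtain z where z: "indepB Z B z r" using rk_attained[OF bZ] r_def by blast
      have zZ: "\<forall>i<Suc r. (z(r := v)) i \<in> Z" using z v by (auto simp: indepB_def less_Suc_eq)
      have "rk Z B < Suc r" using r_def by simp
      then obtain a where a: "comb a (z(r := v)) (Suc r) \<in> B" "\<exists>i<Suc r. a i \<noteq> 0"
        using not_indep[OF bZ _ zZ] by blast
      define S where "S = comb a (z(r := v)) (Suc r)"
      have Seq: "\<And>P. S P = comb a z r P + a r * v P" using comb_upd unfolding S_def by metis
      have ar: "a r \<noteq> 0"
      proof
        assume "a r = 0"
        then have "comb a z r = S" using Seq by auto
        then have "\<forall>i<r. a i = 0" using z a S_def by (auto simp: indepB_def)
        then show False using a(2) \<open>a r = 0\<close> by (auto simp: less_Suc_eq)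
      qed
      have "\<exists>j<r. a j \<noteq> 0"
      proof (rule ccontr)
        assume "\<not> ?thesis"
        then have "comb a z r = (\<lambda>_. 0)" by (auto simp: comb_def)
        then have "S = (\<lambda>P. a r * v P)" using Seq by auto
        then show False using vB a(1) S_def ar by auto
      qed
      then obtain j where j: "j < r" "a j \<noteq> 0" by blast
      have jn: "j \<le> n'" using j Suc by simp
      have skl: "\<And>i. i < n' \<Longrightarrow> sk j i < r" using sk_less jn Suc by auto
      have "indepB Z B' (\<lambda>i. z (sk j i)) n'"
        unfolding indepB_def
      proof (intro conjI allI impI)
        fix i assume "i < n'"
        then show "z (sk j i) \<in> Z" using z skl by (auto simp: indepB_def)
      next
        fix c i assume c: "comb c (\<lambda>i. z (sk j i)) n' \<in> B'" and i: "i < n'"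
        obtain b t where bt: "b \<in> B" "comb c (\<lambda>i. z (sk j i)) n' = (\<lambda>P. b P + t * v P)"
          using c unfolding B' by blast
        define e where "e = ins j (t * a j) (\<lambda>i. a r * c i + t * a (sk j i))"
        have "comb e z r = (\<lambda>P. a r * b P + t * S P)"
        proof
          fix P
          have ca: "comb a z r P = a j * z j P + (\<Sum>i<n'. a (sk j i) * z (sk j i) P)"
            unfolding comb_def Suc using sum_sk[OF jn, of "\<lambda>i. a i * z i P"] by simp
          have cc: "(\<Sum>i<n'. c i * z (sk j i) P) = b P + t * v P"
            using bt(2) unfolding comb_def by meson
          have "comb e z r P = t * a j * z j P + (\<Sum>i<n'. (a r * c i + t * a (sk j i)) * z (sk j i) P)"
            unfolding e_def Suc by (rule comb_ins[OF jn])
          also have "\<dots> = t * a j * z j P + a r * (\<Sum>i<n'. c i * z (sk j i) P) + t * (\<Sum>i<n'. a (sk j i) * z (sk j i) P)"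
            by (simp add: sum.distrib sum_distrib_left distrib_right mult.assoc)
          also have "\<dots> = a r * b P + t * S P"
            unfolding cc Seq ca by (simp add: algebra_simps)
          finally show "comb e z r P = a r * b P + t * S P" .
        qed
        moreover have "(\<lambda>P. a r * b P + t * S P) \<in> B"
        proof -
          have "(\<lambda>P. a r * b P) \<in> B" "(\<lambda>P. t * S P) \<in> B"
            using submod_smult[OF subB] bt(1) a(1) S_def by auto
          from submod_add[OF subB this] show ?thesis by simp
        qed
        ultimately have "\<forall>i<r. e i = 0" using z by (auto simp: indepB_def)
        then have "e j = 0" "e (sk j i) = 0" using j skl[OF i] by auto
        then have "t = 0" "a r * c i + t * a (sk j i) = 0" using j(2) by (auto simp: e_def)
        then show "c i = 0" using ar by simp
      qed
      then have "n' \<le> rk Z B'" using rk_upper[OF bZ'] by blast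
      then show ?thesis using Suc by simp
    qed
  qed
qed

lemma rankA2:
  assumes m: "m \<noteq> 0" and mv: "(\<lambda>P. m * v P) \<in> B" and subB: "submod B"
    and B': "B' = {(\<lambda>P. b P + t * v P) | b t. b \<in> B}"
  shows "rk Z B' = rk Z B"
proof -
  have BB': "B \<subseteq> B'"
  proof
    fix b assume "b \<in> B"
    then have "(\<lambda>P. b P + 0 * v P) \<in> B'" unfolding B' by blast
    then show "b \<in> B'" by simp
  qed
  have "indepB Z B' z n \<longleftrightarrow> indepB Z B z n" for z n
  proof
    assume "indepB Z B' z n" then show "indepB Z B z n" using indep_mono_B BB' by blast
  next
    assume h: "indepB Z B z n"
    show "indepB Z B' z n" unfolding indepB_def
    proof (intro conjI allI impI)
      fix i assume "i < n" then show "z i \<in> Z" using h by (simp add: indepB_def)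
    next
      fix a i assume a: "comb a z n \<in> B'" and i: "i < n"
      obtain b t where bt: "b \<in> B" "comb a z n = (\<lambda>P. b P + t * v P)" using a unfolding B' by blast
      have "comb (\<lambda>i. m * a i) z n = (\<lambda>P. m * b P + t * (m * v P))"
      proof
        fix P
        have "comb (\<lambda>i. m * a i) z n P = m * comb a z n P"
          by (simp add: comb_def sum_distrib_left mult.assoc)
        then show "comb (\<lambda>i. m * a i) z n P = m * b P + t * (m * v P)"
          using bt(2) by (simp add: algebra_simps)
      qed
      moreover have "(\<lambda>P. m * b P + t * (m * v P)) \<in> B"
      proof -
        have "(\<lambda>P. m * b P) \<in> B" "(\<lambda>P. t * (m * v P)) \<in> B"
          using submod_smult[OF subB] bt(1) mv by auto
        from submod_add[OF subB this] show ?thesis by simp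
      qed
      ultimately have "\<forall>i<n. m * a i = 0" using h unfolding indepB_def by metis
      then show "a i = 0" using i m by simp
    qed
  qed
  then show ?thesis unfolding rk_def by simp
qed

section \<open>Concrete chains\<close>

definition csupp :: "(ecube \<Rightarrow> int) \<Rightarrow> ecube set" where
  "csupp c = {Q. c Q \<noteq> 0}"

definition chC :: "ecube set \<Rightarrow> nat \<Rightarrow> (ecube \<Rightarrow> int) set" where
  "chC C k = {c. finite (csupp c) \<and> (\<forall>Q. c Q \<noteq> 0 \<longrightarrow> Q \<in> C \<and> cube_dim Q = k)}"

definition cyC :: "ecube set \<Rightarrow> nat \<Rightarrow> (ecube \<Rightarrow> int) set" where
  "cyC C k = {c \<in> chC C k. chain_bd c = (\<lambda>_. 0)}"

definition bdC :: "ecube set \<Rightarrow> nat \<Rightarrow> (ecube \<Rightarrow> int) set" where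
  "bdC C k = chain_bd ` chC C (Suc k)"

definition bettiC :: "ecube set \<Rightarrow> nat \<Rightarrow> nat" where
  "bettiC C k = rk (cyC C k) (bdC C k)"

definition cset :: "nat \<Rightarrow> real list set \<Rightarrow> ecube set" where
  "cset d S = {Q. length Q = d \<and> realize Q \<subseteq> S}"

definition fc :: "ecube set \<Rightarrow> bool" where
  "fc C \<longleftrightarrow> (\<forall>R\<in>C. \<forall>P. cube_bd R P \<noteq> 0 \<longrightarrow> P \<in> C)"

definition delta :: "ecube \<Rightarrow> ecube \<Rightarrow> int" where
  "delta Q = (\<lambda>R. if R = Q then 1 else 0)"

definition pre :: "int \<times> bool \<Rightarrow> (ecube \<Rightarrow> int) \<Rightarrow> ecube \<Rightarrow> int" where
  "pre a c = (\<lambda>P. case P of [] \<Rightarrow> 0 | b # P' \<Rightarrow> if b = a then c P' else 0)"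

lemma betti_eq: "betti d k S = bettiC (cset d S) k"
proof -
  have ch: "chains d j S = chC (cset d S) j" for j
    by (auto simp: chains_def chC_def cset_def csupp_def)
  have "cycles d k S = cyC (cset d S) k" by (simp add: cycles_def cyC_def ch)
  moreover have "boundaries d k S = bdC (cset d S) k" by (simp add: boundaries_def bdC_def ch)
  ultimately show ?thesis
    by (simp add: betti_def bettiC_def rk_def indepB_def comb_def)
qed

lemma chain_bd_sup:
  assumes "finite F" "csupp c \<subseteq> F"
  shows "chain_bd c P = (\<Sum>Q\<in>F. c Q * cube_bd Q P)"
  unfolding chain_bd_def
  by (rule sum.mono_neutral_left) (use assms in \<open>auto simp: csupp_def\<close>)

lemma csupp_add: "csupp (\<lambda>Q. c1 Q + c2 Q) \<subseteq> csupp c1 \<union> csupp c2"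
  by (auto simp: csupp_def)

lemma chain_bd_add:
  assumes "finite (csupp c1)" "finite (csupp c2)"
  shows "chain_bd (\<lambda>Q. c1 Q + c2 Q) P = chain_bd c1 P + chain_bd c2 P"
proof -
  let ?F = "csupp c1 \<union> csupp c2"
  have f: "finite ?F" using assms by simp
  have "chain_bd (\<lambda>Q. c1 Q + c2 Q) P = (\<Sum>Q\<in>?F. (c1 Q + c2 Q) * cube_bd Q P)"
    by (rule chain_bd_sup[OF f csupp_add])
  also have "\<dots> = (\<Sum>Q\<in>?F. c1 Q * cube_bd Q P) + (\<Sum>Q\<in>?F. c2 Q * cube_bd Q P)"
    by (simp add: distrib_right sum.distrib)
  also have "\<dots> = chain_bd c1 P + chain_bd c2 P"
    using chain_bd_sup[OF f, of c1] chain_bd_sup[OF f, of c2] by auto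
  finally show ?thesis .
qed

lemma chain_bd_diff:
  assumes "finite (csupp c1)" "finite (csupp c2)"
  shows "chain_bd (\<lambda>Q. c1 Q - c2 Q) P = chain_bd c1 P - chain_bd c2 P"
proof -
  let ?F = "csupp c1 \<union> csupp c2"
  have f: "finite ?F" using assms by simp
  have s: "csupp (\<lambda>Q. c1 Q - c2 Q) \<subseteq> ?F" by (auto simp: csupp_def)
  have "chain_bd (\<lambda>Q. c1 Q - c2 Q) P = (\<Sum>Q\<in>?F. (c1 Q - c2 Q) * cube_bd Q P)"
    by (rule chain_bd_sup[OF f s])
  also have "\<dots> = (\<Sum>Q\<in>?F. c1 Q * cube_bd Q P) - (\<Sum>Q\<in>?F. c2 Q * cube_bd Q P)"
    by (simp add: left_diff_distrib sum_subtractf)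
  also have "\<dots> = chain_bd c1 P - chain_bd c2 P"
    using chain_bd_sup[OF f, of c1] chain_bd_sup[OF f, of c2] by auto
  finally show ?thesis .
qed

lemma chain_bd_smult:
  assumes "finite (csupp c)"
  shows "chain_bd (\<lambda>Q. t * c Q) P = t * chain_bd c P"
proof -
  have s: "csupp (\<lambda>Q. t * c Q) \<subseteq> csupp c" by (auto simp: csupp_def)
  have "chain_bd (\<lambda>Q. t * c Q) P = (\<Sum>Q\<in>csupp c. (t * c Q) * cube_bd Q P)"
    by (rule chain_bd_sup[OF assms s])
  also have "\<dots> = t * (\<Sum>Q\<in>csupp c. c Q * cube_bd Q P)"
    by (simp add: sum_distrib_left mult.assoc)
  also have "\<dots> = t * chain_bd c P" using chain_bd_sup[OF assms, of c] by simp
  finally show ?thesis .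
qed

lemma chain_bd_zero: "chain_bd (\<lambda>_. 0) = (\<lambda>_. 0)"
  by (rule ext) (simp add: chain_bd_def)

lemma csupp_delta: "csupp (delta Q) = {Q}"
  by (auto simp: csupp_def delta_def)

lemma chain_bd_delta: "chain_bd (delta Q) = cube_bd Q"
proof
  fix P
  have "chain_bd (delta Q) P = (\<Sum>R\<in>{Q}. delta Q R * cube_bd R P)"
    by (rule chain_bd_sup) (auto simp: csupp_delta)
  then show "chain_bd (delta Q) P = cube_bd Q P" by (simp add: delta_def)
qed

lemma cube_bd_nz:
  assumes "cube_bd R P \<noteq> 0"
  shows "\<exists>i<length R. snd (R!i) \<and> (P = face_plus R i \<or> P = face_minus R i)"
proof -
  obtain j where j: "j < length (nondeg R)"
    "(-1) ^ j * ((if P = face_plus R (nondeg R ! j) then 1 else 0)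
                - (if P = face_minus R (nondeg R ! j) then 1 else 0)) \<noteq> (0::int)"
    using assms unfolding cube_bd_def using sum.not_neutral_contains_not_neutral by blast
  have "nondeg R ! j \<in> set (nondeg R)" using j(1) by simp
  then have "nondeg R ! j < length R" "snd (R ! (nondeg R ! j))" by (auto simp: nondeg_def)
  moreover have "P = face_plus R (nondeg R ! j) \<or> P = face_minus R (nondeg R ! j)"
    using j(2) by (auto split: if_splits)
  ultimately show ?thesis by blast
qed

lemma finite_cube_bd: "finite (csupp (cube_bd R))"
proof -
  have "csupp (cube_bd R) \<subseteq> (\<lambda>i. face_plus R i) ` {..<length R} \<union> (\<lambda>i. face_minus R i) ` {..<length R}"
    using cube_bd_nz by (fastforce simp: csupp_def)
  then show ?thesis by (rule finite_subset) simp
qed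

lemma cube_dim_upd:
  assumes "i < length R" "snd (R!i)"
  shows "Suc (cube_dim (R[i := (x, False)])) = cube_dim R"
proof -
  have e1: "cube_dim R = card {j. j < length R \<and> snd (R!j)}"
    by (simp add: cube_dim_def length_filter_conv_card)
  have e2: "cube_dim (R[i := (x, False)]) = card ({j. j < length R \<and> snd (R!j)} - {i})"
    unfolding cube_dim_def length_filter_conv_card
    by (rule arg_cong[where f=card]) (use assms in \<open>auto simp: nth_list_update split: if_splits\<close>)
  have "i \<in> {j. j < length R \<and> snd (R!j)}" using assms by simp
  then show ?thesis unfolding e1 e2
    by (subst card_Diff_singleton) (auto simp: card_gt_0_iff intro!: Suc_pred)
qed

lemma cube_bd_face:
  assumes "cube_bd R P \<noteq> 0"
  shows "Suc (cube_dim P) = cube_dim R" "length P = length R"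
proof -
  obtain i where i: "i < length R" "snd (R!i)" "P = face_plus R i \<or> P = face_minus R i"
    using cube_bd_nz[OF assms] by blast
  then show "Suc (cube_dim P) = cube_dim R"
    using cube_dim_upd[OF i(1,2)] by (auto simp: face_plus_def face_minus_def)
  show "length P = length R" using i by (auto simp: face_plus_def face_minus_def)
qed

lemma realize_face:
  assumes "cube_bd R P \<noteq> 0"
  shows "realize P \<subseteq> realize R"
proof -
  obtain i where i: "i < length R" "snd (R!i)" "P = face_plus R i \<or> P = face_minus R i"
    using cube_bd_nz[OF assms] by blast
  show ?thesis
  proof
    fix y assume y: "y \<in> realize P"
    have lenP: "length P = length R" using i by (auto simp: face_plus_def face_minus_def)
    have ly: "length y = length R" using y lenP by (simp add: realize_def)
    have "\<forall>i'<length R. real_of_int (fst (R!i')) \<le> y!i' \<and> y!i' \<le> real_of_int (fst (R!i')) + (if snd (R!i') then 1 else 0)"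
    proof (intro allI impI)
      fix i' assume i': "i' < length R"
      have yb: "real_of_int (fst (P!i')) \<le> y!i' \<and> y!i' \<le> real_of_int (fst (P!i')) + (if snd (P!i') then 1 else 0)"
        using y i' lenP by (simp add: realize_def)
      show "real_of_int (fst (R!i')) \<le> y!i' \<and> y!i' \<le> real_of_int (fst (R!i')) + (if snd (R!i') then 1 else 0)"
      proof (cases "i' = i")
        case True
        then show ?thesis using i yb by (auto simp: face_plus_def face_minus_def)
      next
        case False
        then have "P!i' = R!i'" using i by (auto simp: face_plus_def face_minus_def)
        then show ?thesis using yb by simp
      qed
    qed
    then show "y \<in> realize R" using ly by (simp add: realize_def)
  qed
qed

lemma fc_cset: "fc (cset d S)"
  unfolding fc_def cset_def using realize_face cube_bd_face by fastforce

lemma chC_submod: "submod (chC C k)"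
  unfolding submod_def chC_def
proof (intro conjI ballI allI)
  show "(\<lambda>_. 0) \<in> {c. finite (csupp c) \<and> (\<forall>Q. c Q \<noteq> 0 \<longrightarrow> Q \<in> C \<and> cube_dim Q = k)}"
    by (simp add: csupp_def)
next
  fix x y assume "x \<in> {c. finite (csupp c) \<and> (\<forall>Q. c Q \<noteq> 0 \<longrightarrow> Q \<in> C \<and> cube_dim Q = k)}"
    "y \<in> {c. finite (csupp c) \<and> (\<forall>Q. c Q \<noteq> 0 \<longrightarrow> Q \<in> C \<and> cube_dim Q = k)}"
  then show "(\<lambda>P. x P + y P) \<in> {c. finite (csupp c) \<and> (\<forall>Q. c Q \<noteq> 0 \<longrightarrow> Q \<in> C \<and> cube_dim Q = k)}"
    using csupp_add[of x y] apply (auto intro: finite_subset)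
    by (metis add.left_neutral)+
next
  fix x t assume "x \<in> {c. finite (csupp c) \<and> (\<forall>Q. c Q \<noteq> 0 \<longrightarrow> Q \<in> C \<and> cube_dim Q = k)}"
  moreover have "csupp (\<lambda>P. t * x P) \<subseteq> csupp x" by (auto simp: csupp_def)
  ultimately show "(\<lambda>P. t * x P) \<in> {c. finite (csupp c) \<and> (\<forall>Q. c Q \<noteq> 0 \<longrightarrow> Q \<in> C \<and> cube_dim Q = k)}"
    by (auto intro: finite_subset)
qed

lemma chC_fin: "c \<in> chC C k \<Longrightarrow> finite (csupp c)"
  by (simp add: chC_def)

lemma cyC_submod: "submod (cyC C k)"
proof -
  have s: "submod (chC C k)" by (rule chC_submod)
  show ?thesis unfolding submod_def
  proof (intro conjI ballI allI)
    show "(\<lambda>_. 0) \<in> cyC C k" using submod_zero[OF s] by (simp add: cyC_def chain_bd_zero)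
  next
    fix x y assume "x \<in> cyC C k" "y \<in> cyC C k"
    then show "(\<lambda>P. x P + y P) \<in> cyC C k"
      using submod_add[OF s] chain_bd_add[OF chC_fin chC_fin] by (auto simp: cyC_def)
  next
    fix x t assume "x \<in> cyC C k"
    then show "(\<lambda>P. t * x P) \<in> cyC C k"
      using submod_smult[OF s] chain_bd_smult[OF chC_fin] by (auto simp: cyC_def)
  qed
qed

lemma bdC_submod: "submod (bdC C k)"
proof -
  have s: "submod (chC C (Suc k))" by (rule chC_submod)
  show ?thesis unfolding submod_def bdC_def
  proof (intro conjI ballI allI)
    show "(\<lambda>_. 0) \<in> chain_bd ` chC C (Suc k)"
      using submod_zero[OF s] chain_bd_zero by (metis image_eqI)
  next
    fix x y assume "x \<in> chain_bd ` chC C (Suc k)" "y \<in> chain_bd ` chC C (Suc k)"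
    then obtain cx cy where c: "cx \<in> chC C (Suc k)" "cy \<in> chC C (Suc k)" "x = chain_bd cx" "y = chain_bd cy"
      by blast
    have "(\<lambda>P. x P + y P) = chain_bd (\<lambda>Q. cx Q + cy Q)"
      using chain_bd_add[OF chC_fin[OF c(1)] chC_fin[OF c(2)]] c by auto
    then show "(\<lambda>P. x P + y P) \<in> chain_bd ` chC C (Suc k)" using submod_add[OF s c(1,2)] by auto
  next
    fix x t assume "x \<in> chain_bd ` chC C (Suc k)"
    then obtain cx where c: "cx \<in> chC C (Suc k)" "x = chain_bd cx" by blast
    have "(\<lambda>P. t * x P) = chain_bd (\<lambda>Q. t * cx Q)"
      using chain_bd_smult[OF chC_fin[OF c(1)]] c by auto
    then show "(\<lambda>P. t * x P) \<in> chain_bd ` chC C (Suc k)" using submod_smult[OF s c(1)] by auto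
  qed
qed

lemma chain_bd_nz:
  assumes "chain_bd c P \<noteq> 0"
  shows "\<exists>Q. c Q \<noteq> 0 \<and> cube_bd Q P \<noteq> 0"
proof -
  obtain Q where "Q \<in> {Q. c Q \<noteq> 0}" "c Q * cube_bd Q P \<noteq> 0"
    using sum.not_neutral_contains_not_neutral[OF assms[unfolded chain_bd_def]] by blast
  then show ?thesis by auto
qed

lemma chain_bd_in:
  assumes "fc C" "c \<in> chC C (Suc k)"
  shows "chain_bd c \<in> chC C k"
proof -
  have fin: "finite (csupp c)" using assms(2) by (simp add: chC_def)
  have "csupp (chain_bd c) \<subseteq> (\<Union>Q\<in>csupp c. csupp (cube_bd Q))"
  proof
    fix P assume "P \<in> csupp (chain_bd c)"
    then obtain Q where "c Q \<noteq> 0" "cube_bd Q P \<noteq> 0" using chain_bd_nz by (auto simp: csupp_def)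
    then show "P \<in> (\<Union>Q\<in>csupp c. csupp (cube_bd Q))" by (auto simp: csupp_def)
  qed
  then have "finite (csupp (chain_bd c))"
    by (rule finite_subset) (use fin finite_cube_bd in auto)
  moreover have "\<forall>P. chain_bd c P \<noteq> 0 \<longrightarrow> P \<in> C \<and> cube_dim P = k"
  proof (intro allI impI)
    fix P assume "chain_bd c P \<noteq> 0"
    then obtain Q where Q: "c Q \<noteq> 0" "cube_bd Q P \<noteq> 0" using chain_bd_nz by blast
    then have "Q \<in> C" "cube_dim Q = Suc k" using assms(2) by (auto simp: chC_def)
    then show "P \<in> C \<and> cube_dim P = k" using Q assms(1) cube_bd_face[OF Q(2)] by (auto simp: fc_def)
  qed
  ultimately show ?thesis by (simp add: chC_def)
qed

lemma bnd_cyC: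
  assumes "finite C" "(\<lambda>_. 0) \<in> B"
  shows "bnd (cyC C k) B"
  unfolding bnd_def
proof (intro exI allI impI)
  fix z n assume h: "indepB (cyC C k) B z n"
  show "n \<le> card C"
  proof (rule ccontr)
    assume "\<not> n \<le> card C"
    moreover have "\<forall>i<n. \<forall>P. z i P \<noteq> 0 \<longrightarrow> P \<in> C"
      using h by (auto simp: indepB_def cyC_def chC_def)
    ultimately obtain a where a: "\<exists>i<n. a i \<noteq> 0" "comb a z n = (\<lambda>_. 0)"
      using dep[OF assms(1), rule_format, of n z] by auto
    have "\<forall>a. comb a z n \<in> B \<longrightarrow> (\<forall>i<n. a i = 0)" using h by (simp add: indepB_def)
    then have "\<forall>i<n. a i = 0" using a(2) assms(2) by simp
    then show False using a(1) by blast
  qed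
qed

section \<open>Boundary of boundary\<close>

lemma nondeg_Cons: "nondeg (a # Q) = (if snd a then 0 # map Suc (nondeg Q) else map Suc (nondeg Q))"
proof -
  have "[0..<Suc (length Q)] = 0 # map Suc [0..<length Q]"
    by (subst upt_conv_Cons) (simp_all add: map_Suc_upt del: upt_Suc)
  then show ?thesis by (simp add: nondeg_def filter_map o_def)
qed

lemma nondeg_Nil: "nondeg [] = []" by (simp add: nondeg_def)

lemma face_plus_Suc: "face_plus (a # Q) (Suc i) = a # face_plus Q i" by (simp add: face_plus_def)
lemma face_minus_Suc: "face_minus (a # Q) (Suc i) = a # face_minus Q i" by (simp add: face_minus_def)
lemma face_plus_0: "face_plus (a # Q) 0 = (fst a + 1, False) # Q" by (simp add: face_plus_def)
lemma face_minus_0: "face_minus (a # Q) 0 = (fst a, False) # Q" by (simp add: face_minus_def)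

lemma pre_cube_bd: "pre a (cube_bd Q) P = (\<Sum>j<length (nondeg Q). (-1)^j *
   ((if P = a # face_plus Q (nondeg Q ! j) then 1 else 0) - (if P = a # face_minus Q (nondeg Q ! j) then 1 else 0)))"
proof (cases P)
  case Nil then show ?thesis by (simp add: pre_def)
next
  case (Cons b P')
  show ?thesis
  proof (cases "b = a")
    case True then show ?thesis using Cons by (simp add: pre_def cube_bd_def)
  next
    case False then show ?thesis using Cons by (simp add: pre_def)
  qed
qed

lemma cube_bd_ConsF:
  assumes "\<not> snd a"
  shows "cube_bd (a # Q) P = pre a (cube_bd Q) P"
proof -
  have "cube_bd (a # Q) P = (\<Sum>j<length (nondeg Q). (-1)^j *
   ((if P = a # face_plus Q (nondeg Q ! j) then 1 else 0) - (if P = a # face_minus Q (nondeg Q ! j) then 1 else 0)))"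
    unfolding cube_bd_def nondeg_Cons using assms
    by (simp add: face_plus_Suc face_minus_Suc)
  then show ?thesis by (simp add: pre_cube_bd)
qed

lemma cube_bd_ConsT:
  assumes "snd a"
  shows "cube_bd (a # Q) P = delta ((fst a + 1, False) # Q) P - delta ((fst a, False) # Q) P - pre a (cube_bd Q) P"
proof -
  have "cube_bd (a # Q) P = ((if P = (fst a + 1, False) # Q then 1 else 0) - (if P = (fst a, False) # Q then 1 else 0))
     + (\<Sum>j<length (nondeg Q). (-1)^(Suc j) *
   ((if P = a # face_plus Q (nondeg Q ! j) then 1 else 0) - (if P = a # face_minus Q (nondeg Q ! j) then 1 else 0)))"
  proof -
    let ?g = "\<lambda>j. (-1::int)^j * ((if P = face_plus (a # Q) ((0 # map Suc (nondeg Q)) ! j) then 1 else 0)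
                 - (if P = face_minus (a # Q) ((0 # map Suc (nondeg Q)) ! j) then 1 else 0))"
    have "cube_bd (a # Q) P = (\<Sum>j<Suc (length (nondeg Q)). ?g j)"
      unfolding cube_bd_def nondeg_Cons using assms by simp
    also have "\<dots> = ?g 0 + (\<Sum>j<length (nondeg Q). ?g (Suc j))"
      by (rule sum.lessThan_Suc_shift)
    also have "?g 0 = ((if P = (fst a + 1, False) # Q then 1 else 0) - (if P = (fst a, False) # Q then 1 else 0))"
      by (simp add: face_plus_0 face_minus_0)
    also have "(\<Sum>j<length (nondeg Q). ?g (Suc j)) = (\<Sum>j<length (nondeg Q). (-1)^(Suc j) *
   ((if P = a # face_plus Q (nondeg Q ! j) then 1 else 0) - (if P = a # face_minus Q (nondeg Q ! j) then 1 else 0)))"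
      by (rule sum.cong) (simp_all add: face_plus_Suc face_minus_Suc del: power_Suc)
    finally show ?thesis .
  qed
  also have "(\<Sum>j<length (nondeg Q). (-1)^(Suc j) *
   ((if P = a # face_plus Q (nondeg Q ! j) then 1 else 0) - (if P = a # face_minus Q (nondeg Q ! j) then (1::int) else 0)))
    = - pre a (cube_bd Q) P"
    unfolding pre_cube_bd by (simp add: sum_negf[symmetric])
  finally show ?thesis by (simp add: delta_def)
qed

lemma csupp_pre: "csupp (pre a c) = (#) a ` csupp c"
proof
  show "csupp (pre a c) \<subseteq> (#) a ` csupp c"
  proof
    fix P assume P: "P \<in> csupp (pre a c)"
    show "P \<in> (#) a ` csupp c"
    proof (cases P)
      case Nil then show ?thesis using P by (simp add: csupp_def pre_def)
    next
      case (Cons b P')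
      then show ?thesis using P by (auto simp: csupp_def pre_def split: if_splits)
    qed
  qed
qed (auto simp: csupp_def pre_def)

lemma fin_pre: "finite (csupp c) \<Longrightarrow> finite (csupp (pre a c))"
  by (simp add: csupp_pre)

lemma fin_delta: "finite (csupp (delta Q))"
  by (simp add: csupp_delta)

lemma fin_diff: "finite (csupp c1) \<Longrightarrow> finite (csupp c2) \<Longrightarrow> finite (csupp (\<lambda>R. c1 R - c2 R))"
  by (rule finite_subset[of _ "csupp c1 \<union> csupp c2"]) (auto simp: csupp_def)

lemma chain_bd_pre_sum:
  assumes "finite (csupp c)"
  shows "chain_bd (pre a c) P = (\<Sum>R\<in>csupp c. c R * cube_bd (a # R) P)"
proof -
  have "chain_bd (pre a c) P = (\<Sum>Q\<in>(#) a ` csupp c. pre a c Q * cube_bd Q P)"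
    by (rule chain_bd_sup) (use assms in \<open>auto simp: csupp_pre\<close>)
  also have "\<dots> = (\<Sum>R\<in>csupp c. pre a c (a # R) * cube_bd (a # R) P)"
    by (subst sum.reindex) (auto simp: inj_on_def)
  also have "\<dots> = (\<Sum>R\<in>csupp c. c R * cube_bd (a # R) P)"
    by (simp add: pre_def)
  finally show ?thesis .
qed

lemma pre_chain_bd:
  assumes "finite (csupp c)"
  shows "pre a (chain_bd c) P = (\<Sum>R\<in>csupp c. c R * pre a (cube_bd R) P)"
proof (cases P)
  case Nil then show ?thesis by (simp add: pre_def)
next
  case (Cons b P')
  show ?thesis
  proof (cases "b = a")
    case True
    then show ?thesis using Cons chain_bd_sup[OF assms subset_refl, of P'] by (simp add: pre_def)
  next
    case False then show ?thesis using Cons by (simp add: pre_def)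
  qed
qed

lemma sum_delta_pre:
  assumes "finite (csupp c)"
  shows "(\<Sum>R\<in>csupp c. c R * delta (b # R) P) = pre b c P"
proof (cases P)
  case Nil then show ?thesis by (simp add: pre_def delta_def)
next
  case (Cons b' P')
  show ?thesis
  proof (cases "b' = b")
    case True
    have "(\<Sum>R\<in>csupp c. c R * delta (b # R) P) = (\<Sum>R\<in>csupp c. if P' = R then c R else 0)"
      by (rule sum.cong) (auto simp: delta_def Cons True)
    also have "\<dots> = c P'" using assms by (simp add: csupp_def)
    finally show ?thesis using Cons True by (simp add: pre_def)
  next
    case False then show ?thesis using Cons by (simp add: pre_def delta_def)
  qed
qed

lemma chain_bd_preF:
  assumes "finite (csupp c)" "\<not> snd a"
  shows "chain_bd (pre a c) P = pre a (chain_bd c) P"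
  unfolding chain_bd_pre_sum[OF assms(1)] pre_chain_bd[OF assms(1)] cube_bd_ConsF[OF assms(2)] ..

lemma chain_bd_preT:
  assumes "finite (csupp c)" "snd a"
  shows "chain_bd (pre a c) P = pre (fst a + 1, False) c P - pre (fst a, False) c P - pre a (chain_bd c) P"
proof -
  have "chain_bd (pre a c) P = (\<Sum>R\<in>csupp c. c R * delta ((fst a + 1, False) # R) P
        - c R * delta ((fst a, False) # R) P - c R * pre a (cube_bd R) P)"
    unfolding chain_bd_pre_sum[OF assms(1)] cube_bd_ConsT[OF assms(2)]
    by (simp add: right_diff_distrib)
  also have "\<dots> = (\<Sum>R\<in>csupp c. c R * delta ((fst a + 1, False) # R) P)
      - (\<Sum>R\<in>csupp c. c R * delta ((fst a, False) # R) P) - (\<Sum>R\<in>csupp c. c R * pre a (cube_bd R) P)"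
    by (simp add: sum_subtractf)
  also have "\<dots> = pre (fst a + 1, False) c P - pre (fst a, False) c P - pre a (chain_bd c) P"
    unfolding sum_delta_pre[OF assms(1)] pre_chain_bd[OF assms(1)] ..
  finally show ?thesis .
qed

lemma pre_zero: "pre a (\<lambda>_. 0) P = 0"
  by (simp add: pre_def split: list.splits)

lemma bdbd: "chain_bd (cube_bd Q) = (\<lambda>_. 0)"
proof (induction Q)
  case Nil
  have "cube_bd [] = (\<lambda>_. 0)" by (rule ext) (simp add: cube_bd_def nondeg_Nil)
  then show ?case by (simp add: chain_bd_zero)
next
  case (Cons a Q)
  have fQ: "finite (csupp (cube_bd Q))" by (rule finite_cube_bd)
  show ?case
  proof (cases "snd a")
    case False
    have "cube_bd (a # Q) = pre a (cube_bd Q)" by (rule ext) (simp add: cube_bd_ConsF[OF False])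
    then show ?thesis using chain_bd_preF[OF fQ False] Cons.IH by (simp add: pre_zero)
  next
    case True
    define Q1 where "Q1 = (fst a + 1, False) # Q"
    define Q0 where "Q0 = (fst a, False) # Q"
    have e: "cube_bd (a # Q) = (\<lambda>R. (delta Q1 R - delta Q0 R) - pre a (cube_bd Q) R)"
      by (rule ext) (simp add: cube_bd_ConsT[OF True] Q1_def Q0_def)
    show ?thesis
    proof
      fix P
      have f1: "finite (csupp (\<lambda>R. delta Q1 R - delta Q0 R))" by (rule fin_diff[OF fin_delta fin_delta])
      have "chain_bd (cube_bd (a # Q)) P = chain_bd (\<lambda>R. delta Q1 R - delta Q0 R) P - chain_bd (pre a (cube_bd Q)) P"
        unfolding e by (rule chain_bd_diff[OF f1 fin_pre[OF fQ]])
      also have "chain_bd (\<lambda>R. delta Q1 R - delta Q0 R) P = cube_bd Q1 P - cube_bd Q0 P"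
        using chain_bd_diff[OF fin_delta fin_delta] by (simp add: chain_bd_delta)
      also have "cube_bd Q1 P = pre (fst a + 1, False) (cube_bd Q) P"
        unfolding Q1_def by (rule cube_bd_ConsF) simp
      also have "cube_bd Q0 P = pre (fst a, False) (cube_bd Q) P"
        unfolding Q0_def by (rule cube_bd_ConsF) simp
      also have "chain_bd (pre a (cube_bd Q)) P = pre (fst a + 1, False) (cube_bd Q) P - pre (fst a, False) (cube_bd Q) P - pre a (chain_bd (cube_bd Q)) P"
        by (rule chain_bd_preT[OF fQ True])
      finally show "chain_bd (cube_bd (a # Q)) P = 0" using Cons.IH by (simp add: pre_zero)
    qed
  qed
qed

section \<open>Adding one cube\<close>

lemma chC_mono: "C \<subseteq> C' \<Longrightarrow> chC C k \<subseteq> chC C' k"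
  by (auto simp: chC_def)

lemma chC_insert_other: "cube_dim Q \<noteq> j \<Longrightarrow> chC (insert Q C) j = chC C j"
  by (auto simp: chC_def)

lemma chain_bd_plus_delta:
  assumes "finite (csupp c)"
  shows "chain_bd (\<lambda>R. c R + t * delta Q R) P = chain_bd c P + t * cube_bd Q P"
proof -
  have f: "finite (csupp (\<lambda>R. t * delta Q R))"
    by (rule finite_subset[of _ "{Q}"]) (auto simp: csupp_def delta_def)
  have "chain_bd (\<lambda>R. c R + t * delta Q R) P = chain_bd c P + chain_bd (\<lambda>R. t * delta Q R) P"
    by (rule chain_bd_add[OF assms f])
  also have "chain_bd (\<lambda>R. t * delta Q R) P = t * cube_bd Q P"
    using chain_bd_smult[OF fin_delta, of t Q P] by (simp add: chain_bd_delta)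
  finally show ?thesis .
qed

lemma plus_delta_in:
  assumes "y \<in> chC C k" "cube_dim Q = k"
  shows "(\<lambda>R. y R + t * delta Q R) \<in> chC (insert Q C) k"
proof -
  have "csupp (\<lambda>R. y R + t * delta Q R) \<subseteq> insert Q (csupp y)"
    by (auto simp: csupp_def delta_def)
  then have "finite (csupp (\<lambda>R. y R + t * delta Q R))"
    using assms(1) by (auto simp: chC_def intro: finite_subset)
  moreover have "\<forall>R. y R + t * delta Q R \<noteq> 0 \<longrightarrow> R \<in> insert Q C \<and> cube_dim R = k"
    using assms by (auto simp: chC_def delta_def split: if_splits)
  ultimately show ?thesis by (simp add: chC_def)
qed

lemma restrict_ch:
  assumes "e \<in> chC (insert Q C) k" "Q \<notin> C"
  shows "(\<lambda>R. if R = Q then 0 else e R) \<in> chC C k"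
    "e = (\<lambda>R. (if R = Q then 0 else e R) + e Q * delta Q R)"
    "chain_bd e P = chain_bd (\<lambda>R. if R = Q then 0 else e R) P + e Q * cube_bd Q P"
proof -
  show y0: "(\<lambda>R. if R = Q then 0 else e R) \<in> chC C k"
  proof -
    have "csupp (\<lambda>R. if R = Q then 0 else e R) \<subseteq> csupp e" by (auto simp: csupp_def)
    then show ?thesis using assms by (auto simp: chC_def intro: finite_subset)
  qed
  show e: "e = (\<lambda>R. (if R = Q then 0 else e R) + e Q * delta Q R)"
    by (rule ext) (simp add: delta_def)
  have "chain_bd e P = chain_bd (\<lambda>R. (if R = Q then 0 else e R) + e Q * delta Q R) P"
    using e by simp
  also have "\<dots> = chain_bd (\<lambda>R. if R = Q then 0 else e R) P + e Q * cube_bd Q P"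
    by (rule chain_bd_plus_delta) (use y0 in \<open>simp add: chC_def\<close>)
  finally show "chain_bd e P = chain_bd (\<lambda>R. if R = Q then 0 else e R) P + e Q * cube_bd Q P" .
qed

lemma bd_insert:
  assumes "Q \<notin> C" "cube_dim Q = Suc q"
  shows "bdC (insert Q C) q = {(\<lambda>P. b P + t * cube_bd Q P) | b t. b \<in> bdC C q}"
proof
  show "bdC (insert Q C) q \<subseteq> {(\<lambda>P. b P + t * cube_bd Q P) | b t. b \<in> bdC C q}"
  proof
    fix x assume "x \<in> bdC (insert Q C) q"
    then obtain e where e: "e \<in> chC (insert Q C) (Suc q)" "x = chain_bd e" by (auto simp: bdC_def)
    have "x = (\<lambda>P. chain_bd (\<lambda>R. if R = Q then 0 else e R) P + e Q * cube_bd Q P)"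
      using restrict_ch(3)[OF e(1) assms(1)] e(2) by auto
    moreover have "chain_bd (\<lambda>R. if R = Q then 0 else e R) \<in> bdC C q"
      using restrict_ch(1)[OF e(1) assms(1)] by (auto simp: bdC_def)
    ultimately show "x \<in> {(\<lambda>P. b P + t * cube_bd Q P) | b t. b \<in> bdC C q}" by blast
  qed
next
  show "{(\<lambda>P. b P + t * cube_bd Q P) | b t. b \<in> bdC C q} \<subseteq> bdC (insert Q C) q"
  proof
    fix x assume "x \<in> {(\<lambda>P. b P + t * cube_bd Q P) | b t. b \<in> bdC C q}"
    then obtain y t where y: "y \<in> chC C (Suc q)" "x = (\<lambda>P. chain_bd y P + t * cube_bd Q P)"
      by (auto simp: bdC_def)
    have "x = chain_bd (\<lambda>R. y R + t * delta Q R)"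
      using y chain_bd_plus_delta[OF chC_fin[OF y(1)]] by auto
    moreover have "(\<lambda>R. y R + t * delta Q R) \<in> chC (insert Q C) (Suc q)"
      by (rule plus_delta_in[OF y(1) assms(2)])
    ultimately show "x \<in> bdC (insert Q C) q" by (auto simp: bdC_def)
  qed
qed

lemma bd_Q0:
  assumes "fc C" "Q \<notin> C" "y \<in> bdC C k"
  shows "y Q = 0"
proof -
  obtain c where c: "c \<in> chC C (Suc k)" "y = chain_bd c" using assms(3) by (auto simp: bdC_def)
  have "chain_bd c \<in> chC C k" by (rule chain_bd_in[OF assms(1) c(1)])
  then show ?thesis using c assms(2) by (auto simp: chC_def)
qed

lemma bettiC_eq_other:
  assumes "cube_dim Q \<noteq> q" "cube_dim Q \<noteq> Suc q"
  shows "bettiC (insert Q C) q = bettiC C q"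
proof -
  have "chC (insert Q C) q = chC C q" "chC (insert Q C) (Suc q) = chC C (Suc q)"
    using assms chC_insert_other by auto
  then show ?thesis by (simp add: bettiC_def cyC_def bdC_def)
qed

definition witn :: "ecube set \<Rightarrow> ecube \<Rightarrow> bool" where
  "witn C Q \<longleftrightarrow> (\<exists>m c. m \<noteq> 0 \<and> c \<in> chC C (cube_dim Q) \<and> chain_bd c = (\<lambda>P. m * cube_bd Q P))"

lemma local_A:
  assumes fcC: "fc C" and finC: "finite C" and QC: "Q \<notin> C"
    and faces: "\<forall>P. cube_bd Q P \<noteq> 0 \<longrightarrow> P \<in> C" and W: "witn C Q"
  shows "int (bettiC (insert Q C) q) - int (bettiC C q) = (if q = cube_dim Q then 1 else 0)"
proof -
  obtain m c where m: "m \<noteq> 0" and c: "c \<in> chC C (cube_dim Q)" and cb: "chain_bd c = (\<lambda>P. m * cube_bd Q P)"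
    using W by (auto simp: witn_def)
  define k where "k = cube_dim Q"
  have zB: "(\<lambda>_. 0) \<in> bdC C q" by (rule submod_zero[OF bdC_submod])
  consider "q = k" | "Suc q = k" | "q \<noteq> k \<and> Suc q \<noteq> k" by blast
  then show ?thesis
  proof cases
    case 1
    have B: "bdC (insert Q C) k = bdC C k"
      using chC_insert_other[of Q "Suc k" C] k_def by (simp add: bdC_def)
    define w where "w = (\<lambda>R. m * delta Q R - c R)"
    have cQ: "c Q = 0" using c QC by (auto simp: chC_def)
    have fc': "finite (csupp c)" using c by (simp add: chC_def)
    have "rk (cyC (insert Q C) k) (bdC C k) = Suc (rk (cyC C k) (bdC C k))"
    proof (rule rankA[where Q = Q and w = w and m = m])
      show "bnd (cyC C k) (bdC C k)" by (rule bnd_cyC[OF finC submod_zero[OF bdC_submod]])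
      show "bnd (cyC (insert Q C) k) (bdC C k)" by (rule bnd_cyC) (use finC submod_zero[OF bdC_submod] in auto)
      show "cyC C k \<subseteq> cyC (insert Q C) k" using chC_mono[of C "insert Q C" k] by (auto simp: cyC_def)
      have wch: "w \<in> chC (insert Q C) k"
      proof -
        have "(\<lambda>R. (-1) * c R + m * delta Q R) \<in> chC (insert Q C) k"
          by (rule plus_delta_in) (use submod_smult[OF chC_submod c, of "-1"] k_def in simp_all)
        moreover have "(\<lambda>R. (-1) * c R + m * delta Q R) = w" by (rule ext) (simp add: w_def)
        ultimately show ?thesis by simp
      qed
      have "chain_bd w = (\<lambda>_. 0)"
      proof
        fix P
        have "w = (\<lambda>R. (-1) * c R + m * delta Q R)" by (rule ext) (simp add: w_def)
        then have "chain_bd w P = chain_bd (\<lambda>R. (-1) * c R) P + m * cube_bd Q P"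
          using chain_bd_plus_delta[of "\<lambda>R. (-1) * c R" m Q P] fc'
          by (auto intro: finite_subset[of _ "csupp c"] simp: csupp_def)
        also have "chain_bd (\<lambda>R. (-1) * c R) P = (-1) * chain_bd c P" by (rule chain_bd_smult[OF fc'])
        finally show "chain_bd w P = 0" using cb by simp
      qed
      then show "w \<in> cyC (insert Q C) k" using wch by (simp add: cyC_def)
      show "w Q \<noteq> 0" using m cQ by (simp add: w_def delta_def)
      show "\<forall>y\<in>cyC C k. y Q = 0" using QC by (auto simp: cyC_def chC_def)
      show "\<forall>y\<in>bdC C k. y Q = 0" using bd_Q0[OF fcC QC] by blast
      show "m \<noteq> 0" by (rule m)
      show "\<forall>x\<in>cyC C k. \<forall>y\<in>cyC C k. \<forall>s t. (\<lambda>P. s * x P + t * y P) \<in> cyC C k"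
        using submod_add[OF cyC_submod] submod_smult[OF cyC_submod] by blast
      show "\<forall>z\<in>cyC (insert Q C) k. \<exists>y\<in>cyC C k. \<exists>t. \<forall>P. m * z P = y P + t * w P"
      proof
        fix z assume z: "z \<in> cyC (insert Q C) k"
        then have zc: "z \<in> chC (insert Q C) k" and zb: "chain_bd z = (\<lambda>_. 0)" by (auto simp: cyC_def)
        define y0 where "y0 = (\<lambda>R. if R = Q then 0 else z R)"
        have y0c: "y0 \<in> chC C k" using restrict_ch(1)[OF zc QC] by (simp add: y0_def)
        have y0b: "\<And>P. chain_bd y0 P + z Q * cube_bd Q P = 0"
          using restrict_ch(3)[OF zc QC] zb unfolding y0_def by metis
        define y where "y = (\<lambda>R. m * y0 R + z Q * c R)"
        have yc: "y \<in> chC C k"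
          unfolding y_def using submod_add[OF chC_submod submod_smult[OF chC_submod y0c] submod_smult[OF chC_submod c[folded k_def]]] .
        have "chain_bd y = (\<lambda>_. 0)"
        proof
          fix P
          have f1: "finite (csupp (\<lambda>R. m * y0 R))" using submod_smult[OF chC_submod y0c] by (simp add: chC_def)
          have f2: "finite (csupp (\<lambda>R. z Q * c R))" using submod_smult[OF chC_submod c] by (simp add: chC_def)
          have "chain_bd y P = chain_bd (\<lambda>R. m * y0 R) P + chain_bd (\<lambda>R. z Q * c R) P"
            unfolding y_def by (rule chain_bd_add[OF f1 f2])
          also have "\<dots> = m * chain_bd y0 P + z Q * chain_bd c P"
            using chain_bd_smult[OF chC_fin[OF y0c]] chain_bd_smult[OF fc'] by simp
          also have "\<dots> = m * (chain_bd y0 P + z Q * cube_bd Q P)" using cb by (simp add: algebra_simps)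
          also have "\<dots> = 0" using y0b by simp
          finally show "chain_bd y P = 0" .
        qed
        then have "y \<in> cyC C k" using yc by (simp add: cyC_def)
        moreover have "\<forall>P. m * z P = y P + z Q * w P"
          by (auto simp: y_def w_def y0_def delta_def algebra_simps cQ)
        ultimately show "\<exists>y\<in>cyC C k. \<exists>t. \<forall>P. m * z P = y P + t * w P" by blast
      qed
    qed
    then have "bettiC (insert Q C) k = Suc (bettiC C k)" by (simp add: bettiC_def B)
    then show ?thesis using 1 k_def by simp
  next
    case 2
    have Z: "cyC (insert Q C) q = cyC C q" using chC_insert_other[of Q q C] 2 k_def by (simp add: cyC_def)
    have "rk (cyC C q) (bdC (insert Q C) q) = rk (cyC C q) (bdC C q)"
    proof (rule rankA2[OF m _ bdC_submod bd_insert[OF QC]])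
      have "(\<lambda>P. m * cube_bd Q P) = chain_bd c" using cb by simp
      moreover have "c \<in> chC C (Suc q)" using c 2 k_def by simp
      ultimately show "(\<lambda>P. m * cube_bd Q P) \<in> bdC C q" unfolding bdC_def by blast
      show "cube_dim Q = Suc q" using 2 k_def by simp
    qed
    then show ?thesis using 2 k_def by (simp add: bettiC_def Z)
  next
    case 3
    then show ?thesis using bettiC_eq_other[of Q q C] k_def by auto
  qed
qed

lemma local_B:
  assumes fcC: "fc C" and finC: "finite C" and QC: "Q \<notin> C"
    and faces: "\<forall>P. cube_bd Q P \<noteq> 0 \<longrightarrow> P \<in> C" and W: "\<not> witn C Q"
  shows "int (bettiC (insert Q C) q) - int (bettiC C q) = (if Suc q = cube_dim Q then -1 else 0)"
proof -
  define k where "k = cube_dim Q"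
  consider "q = k" | "Suc q = k" | "q \<noteq> k \<and> Suc q \<noteq> k" by blast
  then show ?thesis
  proof cases
    case 1
    have B: "bdC (insert Q C) k = bdC C k"
      using chC_insert_other[of Q "Suc k" C] k_def by (simp add: bdC_def)
    have Z: "cyC (insert Q C) k = cyC C k"
    proof
      show "cyC C k \<subseteq> cyC (insert Q C) k" using chC_mono[of C "insert Q C" k] by (auto simp: cyC_def)
    next
      show "cyC (insert Q C) k \<subseteq> cyC C k"
      proof
        fix z assume z: "z \<in> cyC (insert Q C) k"
        then have zc: "z \<in> chC (insert Q C) k" and zb: "chain_bd z = (\<lambda>_. 0)" by (auto simp: cyC_def)
        define y0 where "y0 = (\<lambda>R. if R = Q then 0 else z R)"
        have y0c: "y0 \<in> chC C k" using restrict_ch(1)[OF zc QC] by (simp add: y0_def)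
        have y0b: "\<And>P. chain_bd y0 P + z Q * cube_bd Q P = 0"
          using restrict_ch(3)[OF zc QC] zb unfolding y0_def by metis
        have zQ: "z Q = 0"
        proof (rule ccontr)
          assume "z Q \<noteq> 0"
          moreover have "chain_bd y0 = (\<lambda>P. (- z Q) * cube_bd Q P)"
            using y0b by (auto simp: algebra_simps eq_neg_iff_add_eq_0)
          ultimately have "witn C Q" using y0c k_def unfolding witn_def by (intro exI[of _ "- z Q"] exI[of _ y0]) auto
          then show False using W by simp
        qed
        have "z = y0" using zQ by (auto simp: y0_def)
        then show "z \<in> cyC C k" using y0c zb by (simp add: cyC_def)
      qed
    qed
    have "bettiC (insert Q C) k = bettiC C k" by (simp add: bettiC_def B Z)
    then show ?thesis using 1 k_def by simp
  next
    case 2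
    have Z: "cyC (insert Q C) q = cyC C q" using chC_insert_other[of Q q C] 2 k_def by (simp add: cyC_def)
    have "Suc (rk (cyC C q) (bdC (insert Q C) q)) = rk (cyC C q) (bdC C q)"
    proof (rule rankB[OF _ _ _ bdC_submod bd_insert[OF QC]])
      show "bnd (cyC C q) (bdC C q)" by (rule bnd_cyC[OF finC submod_zero[OF bdC_submod]])
      have "\<forall>P. cube_bd Q P \<noteq> 0 \<longrightarrow> P \<in> C \<and> cube_dim P = q"
      proof (intro allI impI)
        fix P assume P: "cube_bd Q P \<noteq> 0"
        have "Suc (cube_dim P) = cube_dim Q" by (rule cube_bd_face(1)[OF P])
        then show "P \<in> C \<and> cube_dim P = q" using P faces 2 k_def by simp
      qed
      then have "cube_bd Q \<in> chC C q"
        using finite_cube_bd by (simp add: chC_def)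
      then show "cube_bd Q \<in> cyC C q" by (simp add: cyC_def bdbd)
      show "\<forall>t. (\<lambda>P. t * cube_bd Q P) \<in> bdC C q \<longrightarrow> t = 0"
      proof (intro allI impI)
        fix t assume "(\<lambda>P. t * cube_bd Q P) \<in> bdC C q"
        then obtain c where "c \<in> chC C (Suc q)" "chain_bd c = (\<lambda>P. t * cube_bd Q P)" by (auto simp: bdC_def)
        then show "t = 0" using W 2 k_def unfolding witn_def by auto
      qed
      show "cube_dim Q = Suc q" using 2 k_def by simp
    qed
    then show ?thesis using 2 k_def by (simp add: bettiC_def Z)
  next
    case 3
    then show ?thesis using bettiC_eq_other[of Q q C] k_def by auto
  qed
qed

section \<open>Stabilization\<close>

definition condK :: "nat \<Rightarrow> (nat \<Rightarrow> ecube set) \<Rightarrow> bool" where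
  "condK d K \<longleftrightarrow> (\<forall>n. finite (K n)) \<and> (\<forall>n. fc (K n)) \<and> (\<forall>R. length R = d \<longrightarrow> (\<exists>N. \<forall>n\<ge>N. R \<in> K n))"

lemma ev_finite:
  assumes "condK d K" "finite S"
  shows "(\<forall>R\<in>S. length R = d) \<longrightarrow> (\<exists>N. \<forall>n\<ge>N. S \<subseteq> K n)"
  using assms(2)
proof (induction S rule: finite_induct)
  case empty then show ?case by simp
next
  case (insert x F)
  show ?case
  proof
    assume l: "\<forall>R\<in>insert x F. length R = d"
    then obtain N1 where N1: "\<forall>n\<ge>N1. F \<subseteq> K n" using insert.IH by auto
    obtain N2 where N2: "\<forall>n\<ge>N2. x \<in> K n" using assms(1) l by (auto simp: condK_def)
    show "\<exists>N. \<forall>n\<ge>N. insert x F \<subseteq> K n"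
      by (rule exI[of _ "max N1 N2"]) (use N1 N2 in auto)
  qed
qed

lemma fc_inter: "fc A \<Longrightarrow> fc B \<Longrightarrow> fc (A \<inter> B)"
  by (auto simp: fc_def)

lemma step:
  assumes fcC: "fc C" and QC: "Q \<notin> C" and faces: "\<forall>P. cube_bd Q P \<noteq> 0 \<longrightarrow> P \<in> C"
    and lenC: "\<forall>R\<in>C. length R = d" and lenQ: "length Q = d"
  shows "\<exists>\<Delta>. \<forall>K. condK d K \<longrightarrow> (\<exists>n0. \<forall>n\<ge>n0. int (bettiC (insert Q C \<inter> K n) q) - int (bettiC (C \<inter> K n) q) = \<Delta>)"
proof (cases "witn C Q")
  case True
  obtain m c where m: "m \<noteq> 0" and c: "c \<in> chC C (cube_dim Q)" and cb: "chain_bd c = (\<lambda>P. m * cube_bd Q P)"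
    using True by (auto simp: witn_def)
  show ?thesis
  proof (rule exI[of _ "if q = cube_dim Q then 1 else 0"], intro allI impI)
    fix K assume K: "condK d K"
    have fS: "finite (insert Q (csupp c))" using c by (simp add: chC_def)
    have lS: "\<forall>R\<in>insert Q (csupp c). length R = d" using lenQ lenC c by (auto simp: chC_def csupp_def)
    obtain N where N: "\<forall>n\<ge>N. insert Q (csupp c) \<subseteq> K n" using ev_finite[OF K fS] lS by blast
    show "\<exists>n0. \<forall>n\<ge>n0. int (bettiC (insert Q C \<inter> K n) q) - int (bettiC (C \<inter> K n) q) = (if q = cube_dim Q then 1 else 0)"
    proof (rule exI[of _ N], intro allI impI)
      fix n assume n: "N \<le> n"
      have QK: "Q \<in> K n" and cK: "csupp c \<subseteq> K n" using N n by auto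
      have e: "insert Q C \<inter> K n = insert Q (C \<inter> K n)" using QK by auto
      have fcK: "fc (K n)" and finK: "finite (K n)" using K by (auto simp: condK_def)
      have faces': "\<forall>P. cube_bd Q P \<noteq> 0 \<longrightarrow> P \<in> C \<inter> K n"
        using faces fcK QK by (auto simp: fc_def)
      have "c \<in> chC (C \<inter> K n) (cube_dim Q)" using c cK by (auto simp: chC_def csupp_def)
      then have W: "witn (C \<inter> K n) Q" using m cb by (auto simp: witn_def)
      show "int (bettiC (insert Q C \<inter> K n) q) - int (bettiC (C \<inter> K n) q) = (if q = cube_dim Q then 1 else 0)"
        unfolding e by (rule local_A[OF fc_inter[OF fcC fcK] _ _ faces' W]) (use finK QC in auto)
    qed
  qed
next
  case False
  show ?thesis
  proof (rule exI[of _ "if Suc q = cube_dim Q then -1 else 0"], intro allI impI)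
    fix K assume K: "condK d K"
    obtain N where N: "\<forall>n\<ge>N. Q \<in> K n" using K lenQ by (auto simp: condK_def)
    show "\<exists>n0. \<forall>n\<ge>n0. int (bettiC (insert Q C \<inter> K n) q) - int (bettiC (C \<inter> K n) q) = (if Suc q = cube_dim Q then -1 else 0)"
    proof (rule exI[of _ N], intro allI impI)
      fix n assume n: "N \<le> n"
      have QK: "Q \<in> K n" using N n by auto
      have e: "insert Q C \<inter> K n = insert Q (C \<inter> K n)" using QK by auto
      have fcK: "fc (K n)" and finK: "finite (K n)" using K by (auto simp: condK_def)
      have faces': "\<forall>P. cube_bd Q P \<noteq> 0 \<longrightarrow> P \<in> C \<inter> K n"
        using faces fcK QK by (auto simp: fc_def)
      have W: "\<not> witn (C \<inter> K n) Q"
        using False chC_mono[of "C \<inter> K n" C] unfolding witn_def by blast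
      show "int (bettiC (insert Q C \<inter> K n) q) - int (bettiC (C \<inter> K n) q) = (if Suc q = cube_dim Q then -1 else 0)"
        unfolding e by (rule local_B[OF fc_inter[OF fcC fcK] _ _ faces' W]) (use finK QC in auto)
    qed
  qed
qed

lemma multi:
  assumes "finite (C' - C)" "C \<subseteq> C'" "fc C" "fc C'" "\<forall>R\<in>C'. length R = d"
  shows "\<exists>\<Delta>. \<forall>K. condK d K \<longrightarrow> (\<exists>n0. \<forall>n\<ge>n0. int (bettiC (C' \<inter> K n) q) - int (bettiC (C \<inter> K n) q) = \<Delta>)"
  using assms
proof (induction "card (C' - C)" arbitrary: C' rule: less_induct)
  case less
  show ?case
  proof (cases "C' - C = {}")
    case True
    then have "C' = C" using less.prems by auto
    then show ?thesis by auto
  next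
    case False
    define D where "D = C' - C"
    have fD: "finite D" using less.prems D_def by simp
    define M where "M = Max (cube_dim ` D)"
    have "M \<in> cube_dim ` D" unfolding M_def using fD False D_def by (intro Max_in) auto
    then obtain Q where QD: "Q \<in> D" and QM: "cube_dim Q = M" by auto
    have maxQ: "\<forall>R\<in>D. cube_dim R \<le> cube_dim Q" using fD QM M_def by auto
    define C'' where "C'' = C' - {Q}"
    have QC: "Q \<notin> C" "Q \<in> C'" using QD D_def by auto
    have sub: "C \<subseteq> C''" using less.prems QC by (auto simp: C''_def)
    have noQ: "\<And>R P. R \<in> C' \<Longrightarrow> cube_bd R P \<noteq> 0 \<Longrightarrow> P \<in> C' \<and> P \<noteq> Q"
    proof -
      fix R P assume R: "R \<in> C'" "cube_bd R P \<noteq> 0"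
      have PC': "P \<in> C'" using less.prems(4) R by (auto simp: fc_def)
      have "P \<noteq> Q"
      proof (cases "R \<in> C")
        case True
        then have "P \<in> C" using less.prems(3) R by (auto simp: fc_def)
        then show ?thesis using QC by auto
      next
        case False
        then have "R \<in> D" using R D_def by auto
        then have "cube_dim R \<le> cube_dim Q" using maxQ by auto
        moreover have "Suc (cube_dim P) = cube_dim R" by (rule cube_bd_face(1)[OF R(2)])
        ultimately show ?thesis by auto
      qed
      then show "P \<in> C' \<and> P \<noteq> Q" using PC' by simp
    qed
    have fc'': "fc C''" unfolding fc_def
    proof (intro ballI allI impI)
      fix R P assume "R \<in> C''" "cube_bd R P \<noteq> 0"
      then show "P \<in> C''" using noQ[of R P] by (simp add: C''_def)
    qed
    have faces: "\<forall>P. cube_bd Q P \<noteq> 0 \<longrightarrow> P \<in> C''"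
    proof (intro allI impI)
      fix P assume P: "cube_bd Q P \<noteq> 0"
      have "P \<in> C'" using less.prems(4) QC P by (auto simp: fc_def)
      moreover have "Suc (cube_dim P) = cube_dim Q" by (rule cube_bd_face(1)[OF P])
      ultimately show "P \<in> C''" by (auto simp: C''_def)
    qed
    have card: "card (C'' - C) < card (C' - C)"
      unfolding C''_def using less.prems(1) QC by (intro psubset_card_mono) auto
    obtain \<Delta>1 where D1: "\<forall>K. condK d K \<longrightarrow> (\<exists>n0. \<forall>n\<ge>n0. int (bettiC (C'' \<inter> K n) q) - int (bettiC (C \<inter> K n) q) = \<Delta>1)"
    proof -
      have fin'': "finite (C'' - C)" by (rule finite_subset[OF _ less.prems(1)]) (auto simp: C''_def)
      have len'': "\<forall>R\<in>C''. length R = d" using less.prems(5) by (auto simp: C''_def)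
      show ?thesis using less.hyps[OF card fin'' sub less.prems(3) fc'' len''] that by blast
    qed
    have QC'': "Q \<notin> C''" by (simp add: C''_def)
    obtain \<Delta>2 where D2: "\<forall>K. condK d K \<longrightarrow> (\<exists>n0. \<forall>n\<ge>n0. int (bettiC (insert Q C'' \<inter> K n) q) - int (bettiC (C'' \<inter> K n) q) = \<Delta>2)"
      using step[OF fc'' QC'' faces, of d q] less.prems QC by (auto simp: C''_def)
    have ins: "insert Q C'' = C'" using QC by (auto simp: C''_def)
    show ?thesis
    proof (rule exI[of _ "\<Delta>1 + \<Delta>2"], intro allI impI)
      fix K assume K: "condK d K"
      obtain n1 where n1: "\<forall>n\<ge>n1. int (bettiC (C'' \<inter> K n) q) - int (bettiC (C \<inter> K n) q) = \<Delta>1" using D1 K by blast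
      obtain n2 where n2: "\<forall>n\<ge>n2. int (bettiC (C' \<inter> K n) q) - int (bettiC (C'' \<inter> K n) q) = \<Delta>2" using D2 K ins by auto
      show "\<exists>n0. \<forall>n\<ge>n0. int (bettiC (C' \<inter> K n) q) - int (bettiC (C \<inter> K n) q) = \<Delta>1 + \<Delta>2"
        by (rule exI[of _ "max n1 n2"]) (use n1 n2 in force)
    qed
  qed
qed

section \<open>Geometry\<close>

lemma cset_inter: "cset d (A \<inter> B) = cset d A \<inter> cset d B"
  by (auto simp: cset_def)

lemma fc_union: "fc A \<Longrightarrow> fc B \<Longrightarrow> fc (A \<union> B)"
  by (auto simp: fc_def)

lemma lo_in: "map (\<lambda>p. real_of_int (fst p)) R \<in> realize R"
  by (simp add: realize_def)

lemma finite_cubes_T: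
  assumes "finite T"
  shows "finite {R :: ecube. length R = d \<and> (\<forall>i<d. fst (R!i) \<in> T)}"
proof (rule finite_subset)
  show "{R :: ecube. length R = d \<and> (\<forall>i<d. fst (R!i) \<in> T)} \<subseteq> {xs. set xs \<subseteq> T \<times> UNIV \<and> length xs = d}"
  proof (clarsimp)
    fix R :: ecube and a b assume h: "\<forall>i<length R. fst (R!i) \<in> T" "(a, b) \<in> set R" "d = length R"
    then obtain i where "i < length R" "R ! i = (a, b)" by (auto simp: in_set_conv_nth)
    then show "a \<in> T" using h(1) by force
  qed
  show "finite {xs. set xs \<subseteq> T \<times> (UNIV :: bool set) \<and> length xs = d}"
    by (rule finite_lists_length_eq) (use assms in simp)
qed

lemma cset_diff_finite:
  assumes "bounded_set d ((X - Y) \<union> (Y - X))"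
  shows "finite (cset d X - cset d Y)"
proof -
  obtain R0 where R0: "\<forall>y\<in>(X - Y) \<union> (Y - X). \<forall>i<d. \<bar>y!i\<bar> \<le> R0"
    using assms by (auto simp: bounded_set_def)
  have "cset d X - cset d Y \<subseteq> {R. length R = d \<and> (\<forall>i<d. fst (R!i) \<in> {\<lfloor>- R0\<rfloor> - 1..\<lfloor>R0\<rfloor>})}"
  proof
    fix R assume R: "R \<in> cset d X - cset d Y"
    then have lR: "length R = d" and RX: "realize R \<subseteq> X" and RY: "\<not> realize R \<subseteq> Y"
      by (auto simp: cset_def)
    then obtain y where y: "y \<in> realize R" "y \<notin> Y" by blast
    then have yXY: "y \<in> (X - Y) \<union> (Y - X)" using RX by auto
    have "\<forall>i<d. fst (R!i) \<in> {\<lfloor>- R0\<rfloor> - 1..\<lfloor>R0\<rfloor>}"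
    proof (intro allI impI)
      fix i assume i: "i < d"
      have b: "real_of_int (fst (R!i)) \<le> y!i" "y!i \<le> real_of_int (fst (R!i)) + 1"
        using y(1) i lR by (auto simp: realize_def split: if_splits)
      have "\<bar>y!i\<bar> \<le> R0" using R0 yXY i by blast
      then have "real_of_int (fst (R!i)) \<le> R0" "- R0 - 1 \<le> real_of_int (fst (R!i))" using b by auto
      then have f1: "fst (R!i) \<le> \<lfloor>R0\<rfloor>" and f2: "- R0 - 1 \<le> real_of_int (fst (R!i))"
        by (simp_all add: le_floor_iff)
      have "real_of_int \<lfloor>- R0\<rfloor> \<le> - R0" by (rule of_int_floor_le)
      then have "real_of_int \<lfloor>- R0\<rfloor> \<le> real_of_int (fst (R!i) + 1)" using f2 by simp linarith
      then have "\<lfloor>- R0\<rfloor> \<le> fst (R!i) + 1" by (simp only: of_int_le_iff)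
      then show "fst (R!i) \<in> {\<lfloor>- R0\<rfloor> - 1..\<lfloor>R0\<rfloor>}" using f1 by simp
    qed
    then show "R \<in> {R. length R = d \<and> (\<forall>i<d. fst (R!i) \<in> {\<lfloor>- R0\<rfloor> - 1..\<lfloor>R0\<rfloor>})}" using lR by simp
  qed
  then show ?thesis by (rule finite_subset) (rule finite_cubes_T, simp)
qed

lemma cset_box_finite: "finite (cset d (box d x m))"
proof -
  let ?T = "\<Union>i<d. {x!i - int m .. x!i + int m}"
  have "cset d (box d x m) \<subseteq> {R. length R = d \<and> (\<forall>i<d. fst (R!i) \<in> ?T)}"
  proof
    fix R assume R: "R \<in> cset d (box d x m)"
    then have lR: "length R = d" and sub: "realize R \<subseteq> box d x m" by (auto simp: cset_def)
    have "map (\<lambda>p. real_of_int (fst p)) R \<in> box d x m" using lo_in sub by blast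
    then have h: "\<forall>i<d. \<bar>real_of_int (fst (R!i)) - real_of_int (x!i)\<bar> \<le> real m"
      using lR by (simp add: box_def)
    have "\<forall>i<d. fst (R!i) \<in> ?T"
    proof (intro allI impI)
      fix i assume i: "i < d"
      have "\<bar>real_of_int (fst (R!i) - x!i)\<bar> \<le> real m" using h i by simp
      then have "\<bar>fst (R!i) - x!i\<bar> \<le> int m" by linarith
      then show "fst (R!i) \<in> ?T" using i by (intro UN_I[of i]) auto
    qed
    then show "R \<in> {R. length R = d \<and> (\<forall>i<d. fst (R!i) \<in> ?T)}" using lR by simp
  qed
  then show ?thesis by (rule finite_subset) (rule finite_cubes_T, simp)
qed

lemma condK_box:
  assumes "\<forall>z :: int list. length z = d \<longrightarrow> (\<exists>N. \<forall>n\<ge>N. map real_of_int z \<in> box d (x n) (m n))"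
  shows "condK d (\<lambda>n. cset d (box d (x n) (m n)))"
  unfolding condK_def
proof (intro conjI allI impI)
  fix n show "finite (cset d (box d (x n) (m n)))" by (rule cset_box_finite)
next
  fix n show "fc (cset d (box d (x n) (m n)))" by (rule fc_cset)
next
  fix R :: ecube assume lR: "length R = d"
  define lo where "lo = map fst R"
  define up where "up = map (\<lambda>p. fst p + (if snd p then 1 else 0)) R"
  have ll: "length lo = d" and lu: "length up = d" using lR by (simp_all add: lo_def up_def)
  have "\<exists>N. \<forall>n\<ge>N. map real_of_int lo \<in> box d (x n) (m n)" using assms ll by blast
  then obtain N1 where N1: "\<forall>n\<ge>N1. map real_of_int lo \<in> box d (x n) (m n)" by blast
  have "\<exists>N. \<forall>n\<ge>N. map real_of_int up \<in> box d (x n) (m n)" using assms lu by blast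
  then obtain N2 where N2: "\<forall>n\<ge>N2. map real_of_int up \<in> box d (x n) (m n)" by blast
  show "\<exists>N. \<forall>n\<ge>N. R \<in> cset d (box d (x n) (m n))"
  proof (rule exI[of _ "max N1 N2"], intro allI impI)
    fix n assume n: "max N1 N2 \<le> n"
    have hl: "\<forall>i<d. \<bar>real_of_int (fst (R!i)) - real_of_int (x n!i)\<bar> \<le> real (m n)"
      using N1 n lR by (simp add: box_def lo_def)
    have hu: "\<forall>i<d. \<bar>real_of_int (fst (R!i) + (if snd (R!i) then 1 else 0)) - real_of_int (x n!i)\<bar> \<le> real (m n)"
      using N2 n lR by (simp add: box_def up_def)
    have "realize R \<subseteq> box d (x n) (m n)"
    proof
      fix y assume y: "y \<in> realize R"
      have ly: "length y = d" using y lR by (simp add: realize_def)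
      have "\<forall>i<d. \<bar>y!i - real_of_int (x n!i)\<bar> \<le> real (m n)"
      proof (intro allI impI)
        fix i assume i: "i < d"
        have b: "real_of_int (fst (R!i)) \<le> y!i" "y!i \<le> real_of_int (fst (R!i)) + (if snd (R!i) then 1 else 0)"
          using y i lR by (auto simp: realize_def)
        have u: "\<bar>real_of_int (fst (R!i)) + (if snd (R!i) then 1 else 0) - real_of_int (x n!i)\<bar> \<le> real (m n)"
          using hu i by (cases "snd (R!i)") auto
        show "\<bar>y!i - real_of_int (x n!i)\<bar> \<le> real (m n)" using hl i b u by (auto simp: abs_le_iff)
      qed
      then show "y \<in> box d (x n) (m n)" using ly by (simp add: box_def)
    qed
    then show "R \<in> cset d (box d (x n) (m n))" using lR by (simp add: cset_def)
  qed
qed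


theorem proposition4p2:
  fixes d q :: nat and X Y :: "real list set"
  assumes "q < d" and "cubical_set d X" and "cubical_set d Y"
    and "bounded_set d ((X - Y) \<union> (Y - X))"
  shows "\<exists>\<Delta>::int. \<forall>(x :: nat \<Rightarrow> int list) (m :: nat \<Rightarrow> nat).
     ((\<forall>n. length (x n) = d) \<and>
      (\<forall>z :: int list. length z = d \<longrightarrow>
          (\<exists>N. \<forall>n\<ge>N. map real_of_int z \<in> box d (x n) (m n))))
     \<longrightarrow> (\<exists>n0. \<forall>n\<ge>n0. int (betti d q (X \<inter> box d (x n) (m n)))
                          - int (betti d q (Y \<inter> box d (x n) (m n))) = \<Delta>)"
proof -
  define CX where "CX = cset d X"
  define CY where "CY = cset d Y"
  define U where "U = CX \<union> CY"
  have fU: "fc U" unfolding U_def CX_def CY_def by (rule fc_union[OF fc_cset fc_cset])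
  have lU: "\<forall>R\<in>U. length R = d" by (auto simp: U_def CX_def CY_def cset_def)
  have b2: "bounded_set d ((Y - X) \<union> (X - Y))" using assms(4) by (simp add: Un_commute)
  have f1: "finite (U - CY)" using cset_diff_finite[OF assms(4)]
    by (simp add: U_def CX_def CY_def Un_Diff)
  have f2: "finite (U - CX)" using cset_diff_finite[OF b2]
    by (simp add: U_def CX_def CY_def Un_Diff)
  obtain \<Delta>1 where D1: "\<forall>K. condK d K \<longrightarrow> (\<exists>n0. \<forall>n\<ge>n0. int (bettiC (U \<inter> K n) q) - int (bettiC (CY \<inter> K n) q) = \<Delta>1)"
    using multi[OF f1 _ _ fU lU, of q] fc_cset unfolding U_def CY_def by blast
  obtain \<Delta>2 where D2: "\<forall>K. condK d K \<longrightarrow> (\<exists>n0. \<forall>n\<ge>n0. int (bettiC (U \<inter> K n) q) - int (bettiC (CX \<inter> K n) q) = \<Delta>2)"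
    using multi[OF f2 _ _ fU lU, of q] fc_cset unfolding U_def CX_def by blast
  show ?thesis
  proof (rule exI[of _ "\<Delta>1 - \<Delta>2"], intro allI impI)
    fix x :: "nat \<Rightarrow> int list" and m :: "nat \<Rightarrow> nat"
    assume h: "(\<forall>n. length (x n) = d) \<and>
      (\<forall>z :: int list. length z = d \<longrightarrow> (\<exists>N. \<forall>n\<ge>N. map real_of_int z \<in> box d (x n) (m n)))"
    define K where "K = (\<lambda>n. cset d (box d (x n) (m n)))"
    have K: "condK d K" unfolding K_def by (rule condK_box) (use h in blast)
    obtain n1 where n1: "\<forall>n\<ge>n1. int (bettiC (U \<inter> K n) q) - int (bettiC (CY \<inter> K n) q) = \<Delta>1" using D1 K by blast
    obtain n2 where n2: "\<forall>n\<ge>n2. int (bettiC (U \<inter> K n) q) - int (bettiC (CX \<inter> K n) q) = \<Delta>2" using D2 K by blast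
    show "\<exists>n0. \<forall>n\<ge>n0. int (betti d q (X \<inter> box d (x n) (m n))) - int (betti d q (Y \<inter> box d (x n) (m n))) = \<Delta>1 - \<Delta>2"
    proof (rule exI[of _ "max n1 n2"], intro allI impI)
      fix n assume n: "max n1 n2 \<le> n"
      have "betti d q (X \<inter> box d (x n) (m n)) = bettiC (CX \<inter> K n) q"
        by (simp add: betti_eq cset_inter CX_def K_def)
      moreover have "betti d q (Y \<inter> box d (x n) (m n)) = bettiC (CY \<inter> K n) q"
        by (simp add: betti_eq cset_inter CY_def K_def)
      moreover have "int (bettiC (U \<inter> K n) q) - int (bettiC (CY \<inter> K n) q) = \<Delta>1" using n1 n by simp
      moreover have "int (bettiC (U \<inter> K n) q) - int (bettiC (CX \<inter> K n) q) = \<Delta>2" using n2 n by simp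
      ultimately show "int (betti d q (X \<inter> box d (x n) (m n))) - int (betti d q (Y \<inter> box d (x n) (m n))) = \<Delta>1 - \<Delta>2"
        by simp
    qed
  qed
qed

end
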